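(* Every label of the shape $-\mid open\ n.T_1$ (with $n$ an ambient name and $T_1$ a pure process) of the mobile-ambient transition system $M_I$ is stable under $\sim^{BS}_M$: whenever $P\sim^{BS}_M Q$ and $P\xrightarrow{-|open\ n.T_1}_{M_I}P'$, there is $Q'$ with $Q\xrightarrow{-|open\ n.T_1}_{M_I}Q'$ and $P'\sim^{BS}_M Q'$.
   Context: Mobile ambients (finite, communication-free fragment). Pure processes $P::=\mathbf{0}\mid n[P]\mid M.P\mid(\nu n)P\mid P_1|P_2$, $M::=in\ n\mid out\ n\mid open\ n$. Structural congruence $\equiv$: least congruence with $|$ commutative, associative, unit $\mathbf{0}$; $(\nu n)(\nu m)P\equiv(\nu m)(\nu n)P$; $(\nu n)(P|Q)\equiv P|(\nu n)Q$ if $n\notin fn(P)$; $(\nu n)m[P]\equiv m[(\nu n)P]$ if $n\ne m$; $(\nu n)M.P\equiv M.(\nu n)P$ if $n\notin fn(M)$; $\alpha$-conversion. Reduction $\rightsquigarrow$: least relation closed under $\equiv$, $(\nu n)-$, $n[-]$, $-|R$, generated by $n[in\ m.P|Q]|m[R]\rightsquigarrow m[n[P|Q]|R]$, $m[n[out\ m.P|Q]|R]\rightsquigarrow n[P|Q]|m[R]$, $open\ n.P|n[Q]\rightsquigarrow P|Q$. Barb $P\downarrow_n$ iff $P\equiv(\nu A)(n[Q]|R)$ with $n\notin A$. Barbed saturated bisimilarity $\sim^{BS}_M$ is the largest symmetric relation $\mathcal{R}$ on pure processes such that if $P\,\mathcal{R}\,Q$ then for every (pure, unary) context $C[-]$ and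 name $n$: $C[P]\downarrow_n$ implies $C[Q]\downarrow_n$, and $C[P]\rightsquigarrow P'$ implies $C[Q]\rightsquigarrow Q'$ for some $Q'$ with $P'\,\mathcal{R}\,Q'$. In $M_I$, $P\xrightarrow{-|open\ n.T_1}_{M_I}P'$ holds iff $P\equiv(\nu A)(n[P_1]|P_2)$ with $n\notin A$ and $P'\equiv(\nu A)(P_1|T_1|P_2)$ (with $A$ $\alpha$-converted to avoid capturing free names of $T_1$); this is the instantiation of the rule (CoOpen) $P\xrightarrow{-|open\ n.X_1}(\nu A)(P_1|X_1|P_2)$ by substituting $T_1$ for the process variable $X_1$. *)

theory Defs
  imports Main
begin

(* Ambient names: an infinite supply, here the natural numbers. *)
type_synonym name = nat

datatype cap = In name | Out name | Open name

datatype proc =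
    Nil
  | Amb name proc
  | Act cap proc
  | Res name proc
  | Par proc proc

fun fn_cap :: "cap \<Rightarrow> name set" where
  "fn_cap (In n) = {n}"
| "fn_cap (Out n) = {n}"
| "fn_cap (Open n) = {n}"

fun fn :: "proc \<Rightarrow> name set" where
  "fn Nil = {}"
| "fn (Amb n P) = insert n (fn P)"
| "fn (Act M P) = fn_cap M \<union> fn P"
| "fn (Res n P) = fn P - {n}"
| "fn (Par P Q) = fn P \<union> fn Q"

fun names :: "proc \<Rightarrow> name set" where
  "names Nil = {}"
| "names (Amb n P) = insert n (names P)"
| "names (Act M P) = fn_cap M \<union> names P"
| "names (Res n P) = insert n (names P)"
| "names (Par P Q) = names P \<union> names Q"

(* renaming of free occurrences of n into m; capture-free whenever m \<notin> names P *)
definition rn :: "name \<Rightarrow> name \<Rightarrow> name \<Rightarrow> name" where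
  "rn m n k = (if k = n then m else k)"

fun subst_cap :: "name \<Rightarrow> name \<Rightarrow> cap \<Rightarrow> cap" where
  "subst_cap m n (In k) = In (rn m n k)"
| "subst_cap m n (Out k) = Out (rn m n k)"
| "subst_cap m n (Open k) = Open (rn m n k)"

fun subst :: "name \<Rightarrow> name \<Rightarrow> proc \<Rightarrow> proc" where
  "subst m n Nil = Nil"
| "subst m n (Amb k P) = Amb (rn m n k) (subst m n P)"
| "subst m n (Act M P) = Act (subst_cap m n M) (subst m n P)"
| "subst m n (Res k P) = (if k = n then Res k P else Res k (subst m n P))"
| "subst m n (Par P Q) = Par (subst m n P) (subst m n Q)"

fun resl :: "name list \<Rightarrow> proc \<Rightarrow> proc" where
  "resl [] P = P"
| "resl (a # A) P = Res a (resl A P)"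

inductive scong :: "proc \<Rightarrow> proc \<Rightarrow> bool" where
  sc_refl: "scong P P"
| sc_sym: "scong P Q \<Longrightarrow> scong Q P"
| sc_trans: "scong P Q \<Longrightarrow> scong Q R \<Longrightarrow> scong P R"
| sc_amb: "scong P Q \<Longrightarrow> scong (Amb n P) (Amb n Q)"
| sc_act: "scong P Q \<Longrightarrow> scong (Act M P) (Act M Q)"
| sc_res: "scong P Q \<Longrightarrow> scong (Res n P) (Res n Q)"
| sc_par: "scong P P' \<Longrightarrow> scong Q Q' \<Longrightarrow> scong (Par P Q) (Par P' Q')"
| sc_par_comm: "scong (Par P Q) (Par Q P)"
| sc_par_assoc: "scong (Par (Par P Q) R) (Par P (Par Q R))"
| sc_par_nil: "scong (Par P Nil) P"
| sc_res_res: "scong (Res n (Res m P)) (Res m (Res n P))"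
| sc_res_par: "n \<notin> fn P \<Longrightarrow> scong (Res n (Par P Q)) (Par P (Res n Q))"
| sc_res_amb: "n \<noteq> m \<Longrightarrow> scong (Res n (Amb m P)) (Amb m (Res n P))"
| sc_res_act: "n \<notin> fn_cap M \<Longrightarrow> scong (Res n (Act M P)) (Act M (Res n P))"
| sc_alpha: "m \<notin> names P \<Longrightarrow> scong (Res n P) (Res m (subst m n P))"

inductive red :: "proc \<Rightarrow> proc \<Rightarrow> bool" where
  red_in: "red (Par (Amb n (Par (Act (In m) P) Q)) (Amb m R))
               (Amb m (Par (Amb n (Par P Q)) R))"
| red_out: "red (Amb m (Par (Amb n (Par (Act (Out m) P) Q)) R))
                (Par (Amb n (Par P Q)) (Amb m R))"
| red_open: "red (Par (Act (Open n) P) (Amb n Q)) (Par P Q)"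
| red_res: "red P Q \<Longrightarrow> red (Res n P) (Res n Q)"
| red_amb: "red P Q \<Longrightarrow> red (Amb n P) (Amb n Q)"
| red_par: "red P Q \<Longrightarrow> red (Par P R) (Par Q R)"
| red_scong: "scong P P' \<Longrightarrow> red P' Q' \<Longrightarrow> scong Q' Q \<Longrightarrow> red P Q"

definition barb :: "proc \<Rightarrow> name \<Rightarrow> bool" where
  "barb P n \<longleftrightarrow> (\<exists>A Q R. scong P (resl A (Par (Amb n Q) R)) \<and> n \<notin> set A)"

datatype ctx =
    Hole
  | CAmb name ctx
  | CAct cap ctx
  | CRes name ctx
  | CParL ctx proc
  | CParR proc ctx

fun fill :: "ctx \<Rightarrow> proc \<Rightarrow> proc" where
  "fill Hole P = P"
| "fill (CAmb n C) P = Amb n (fill C P)"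
| "fill (CAct M C) P = Act M (fill C P)"
| "fill (CRes n C) P = Res n (fill C P)"
| "fill (CParL C R) P = Par (fill C P) R"
| "fill (CParR R C) P = Par R (fill C P)"

definition bs_bisim :: "(proc \<Rightarrow> proc \<Rightarrow> bool) \<Rightarrow> bool" where
  "bs_bisim \<R> \<longleftrightarrow>
     (\<forall>P Q. \<R> P Q \<longrightarrow> \<R> Q P) \<and>
     (\<forall>P Q. \<R> P Q \<longrightarrow>
        (\<forall>C n. barb (fill C P) n \<longrightarrow> barb (fill C Q) n) \<and>
        (\<forall>C P'. red (fill C P) P' \<longrightarrow> (\<exists>Q'. red (fill C Q) Q' \<and> \<R> P' Q')))"

definition bisimBS :: "proc \<Rightarrow> proc \<Rightarrow> bool" where
  "bisimBS P Q \<longleftrightarrow> (\<exists>\<R>. bs_bisim \<R> \<and> \<R> P Q)"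

definition open_trans :: "name \<Rightarrow> proc \<Rightarrow> proc \<Rightarrow> proc \<Rightarrow> bool" where
  "open_trans n T P P' \<longleftrightarrow>
     (\<exists>A P1 P2. scong P (resl A (Par (Amb n P1) P2)) \<and> n \<notin> set A \<and>
                set A \<inter> fn T = {} \<and>
                scong P' (resl A (Par (Par P1 T) P2)))"

end

theory Submission
  imports Defs "HOL-Library.Multiset" "HOL-Combinatorics.Permutations"
begin



datatype 'a cc = CIn 'a | COut 'a | COpen 'a
datatype 'a tree = TAmb 'a "'a tree multiset" | TAct "'a cc" "'a tree multiset"
datatype cn = FN name | BN nat

type_synonym forest = "cn tree multiset"

definition mapf :: "('a \<Rightarrow> 'b) \<Rightarrow> 'a tree multiset \<Rightarrow> 'b tree multiset" where
  "mapf f M = image_mset (map_tree f) M"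

definition atoms :: "'a tree multiset \<Rightarrow> 'a set" where
  "atoms M = \<Union> (set_tree ` set_mset M)"

fun ccof :: "cap \<Rightarrow> cn cc" where
  "ccof (In m) = CIn (FN m)"
| "ccof (Out m) = COut (FN m)"
| "ccof (Open m) = COpen (FN m)"

definition bnd :: "name \<Rightarrow> nat \<Rightarrow> cn \<Rightarrow> cn" where
  "bnd m r x = (if x = FN m then BN r else x)"
definition shb :: "nat \<Rightarrow> cn \<Rightarrow> cn" where
  "shb k x = (case x of BN i \<Rightarrow> BN (i+k) | FN a \<Rightarrow> FN a)"
definition pb :: "(nat \<Rightarrow> nat) \<Rightarrow> cn \<Rightarrow> cn" where
  "pb p x = (case x of BN i \<Rightarrow> BN (p i) | FN a \<Rightarrow> FN a)"

fun nres :: "proc \<Rightarrow> nat" where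
  "nres Nil = 0"
| "nres (Amb m P) = nres P"
| "nres (Act M P) = nres P"
| "nres (Res m P) = Suc (nres P)"
| "nres (Par P Q) = nres P + nres Q"

fun cf :: "proc \<Rightarrow> forest" where
  "cf Nil = {#}"
| "cf (Amb m P) = {#TAmb (FN m) (cf P)#}"
| "cf (Act M P) = {#TAct (ccof M) (cf P)#}"
| "cf (Res m P) = mapf (bnd m (nres P)) (cf P)"
| "cf (Par P Q) = cf P + mapf (shb (nres P)) (cf Q)"

lemma atoms_simps[simp]:
  "atoms {#} = {}" "atoms (add_mset t M) = set_tree t \<union> atoms M"
  "atoms (M + N) = atoms M \<union> atoms N"
  by (auto simp: atoms_def)

lemma atoms_mapf[simp]: "atoms (mapf f M) = f ` atoms M"
  by (auto simp: atoms_def mapf_def tree.set_map)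

lemma mapf_simps[simp]:
  "mapf f {#} = {#}" "mapf f (add_mset t M) = add_mset (map_tree f t) (mapf f M)"
  "mapf f (M + N) = mapf f M + mapf f N"
  by (auto simp: mapf_def)

lemma mapf_comp[simp]: "mapf f (mapf g M) = mapf (f \<circ> g) M"
  unfolding mapf_def by (simp add: image_mset.compositionality o_def tree.map_comp)

lemma mapf_cong: "(\<And>x. x \<in> atoms M \<Longrightarrow> f x = g x) \<Longrightarrow> mapf f M = mapf g M"
  unfolding mapf_def atoms_def
  by (rule image_mset_cong, rule tree.map_cong0) auto

lemma mapf_id: "(\<And>x. x \<in> atoms M \<Longrightarrow> f x = x) \<Longrightarrow> mapf f M = M"
proof -
  assume a: "\<And>x. x \<in> atoms M \<Longrightarrow> f x = x"
  have "mapf f M = mapf id M" by (rule mapf_cong) (simp add: a)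
  also have "\<dots> = M" by (simp add: mapf_def tree.map_id0)
  finally show ?thesis .
qed

lemma set_tree_TAct[simp]: "set_tree (TAct c M) = set_cc c \<union> atoms M"
  by (auto simp: atoms_def)
lemma set_tree_TAmb[simp]: "set_tree (TAmb a M) = insert a (atoms M)"
  by (auto simp: atoms_def)

declare tree.set[simp del]

lemma set_ccof[simp]: "set_cc (ccof M) = FN ` fn_cap M"
  by (cases M) auto

lemma bnd_FN[simp]: "bnd m r (FN a) = (if a = m then BN r else FN a)"
  and bnd_BN[simp]: "bnd m r (BN i) = BN i"
  by (auto simp: bnd_def)
lemma shb_FN[simp]: "shb k (FN a) = FN a" and shb_BN[simp]: "shb k (BN i) = BN (i+k)"
  by (auto simp: shb_def)
lemma pb_FN[simp]: "pb p (FN a) = FN a" and pb_BN[simp]: "pb p (BN i) = BN (p i)"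
  by (auto simp: pb_def)

lemma FN_in_bnd: "FN a \<in> bnd m r ` S \<longleftrightarrow> a \<noteq> m \<and> FN a \<in> S"
  by (auto simp: bnd_def image_iff split: if_splits)
lemma BN_in_bnd: "BN i \<in> bnd m r ` S \<longleftrightarrow> BN i \<in> S \<or> (i = r \<and> FN m \<in> S)"
  by (auto simp: bnd_def image_iff split: if_splits)
lemma FN_in_shb: "FN a \<in> shb k ` S \<longleftrightarrow> FN a \<in> S"
  by (auto simp: image_iff; metis cn.exhaust cn.simps(4) shb_BN shb_FN)
lemma BN_in_shb: "BN i \<in> shb k ` S \<longleftrightarrow> k \<le> i \<and> BN (i - k) \<in> S"
  apply (auto simp: image_iff)
  apply (metis cn.exhaust cn.distinct(1) cn.inject(2) le_add2 shb_BN shb_FN)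
  apply (metis cn.exhaust cn.distinct(1) cn.inject(2) add_diff_cancel_right' shb_BN shb_FN)
  by (metis le_add_diff_inverse2 shb_BN)
lemma FN_in_pb: "FN a \<in> pb p ` S \<longleftrightarrow> FN a \<in> S"
  by (auto simp: image_iff; metis cn.exhaust cn.simps(4) pb_BN pb_FN)

lemmas in_img = FN_in_bnd BN_in_bnd FN_in_shb BN_in_shb FN_in_pb

lemma fn_cf: "FN a \<in> atoms (cf P) \<longleftrightarrow> a \<in> fn P"
  by (induction P) (auto simp: in_img)

lemma wf_cf: "BN i \<in> atoms (cf P) \<Longrightarrow> i < nres P"
  by (induction P arbitrary: i) (force simp: in_img)+




lemma map_tree_simps[simp]:
  "map_tree f (TAmb a M) = TAmb (f a) (mapf f M)"
  "map_tree f (TAct c M) = TAct (map_cc f c) (mapf f M)"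
  by (auto simp: mapf_def)

declare tree.map[simp del]

definition eqv :: "nat \<Rightarrow> forest \<Rightarrow> forest \<Rightarrow> bool" where
  "eqv r F G \<longleftrightarrow> (\<exists>p. p permutes {..<r} \<and> G = mapf (pb p) F)"

definition wff :: "nat \<Rightarrow> forest \<Rightarrow> bool" where
  "wff r F \<longleftrightarrow> (\<forall>i. BN i \<in> atoms F \<longrightarrow> i < r)"

lemma wff_cf: "wff (nres P) (cf P)"
  using wf_cf by (auto simp: wff_def)

lemma pb_id: "pb id = id" by (auto simp: pb_def fun_eq_iff split: cn.splits)

lemma eqv_refl: "eqv r F F"
  unfolding eqv_def
  by (rule exI[of _ id]) (auto simp: permutes_id pb_def intro: mapf_id[symmetric] split: cn.splits)

lemma eqv_sym: "eqv r F G \<Longrightarrow> eqv r G F"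
  unfolding eqv_def
proof (elim exE conjE)
  fix p assume p: "p permutes {..<r}" and G: "G = mapf (pb p) F"
  have "mapf (pb (inv p)) G = F"
    unfolding G mapf_comp
    by (rule mapf_id) (auto simp: pb_def permutes_inverses[OF p] split: cn.splits)
  then show "\<exists>p. p permutes {..<r} \<and> F = mapf (pb p) G"
    using permutes_inv[OF p] by auto
qed

lemma eqv_trans: "eqv r F G \<Longrightarrow> eqv r G H \<Longrightarrow> eqv r F H"
  unfolding eqv_def
proof (elim exE conjE)
  fix p q assume p: "p permutes {..<r}" and G: "G = mapf (pb p) F"
     and q: "q permutes {..<r}" and H: "H = mapf (pb q) G"
  have "H = mapf (pb (q \<circ> p)) F"
    unfolding H G mapf_comp
    by (rule mapf_cong) (auto simp: pb_def split: cn.splits)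
  then show "\<exists>p. p permutes {..<r} \<and> H = mapf (pb p) F"
    using permutes_compose[OF p q] by auto
qed

lemma map_cc_pb_ccof[simp]: "map_cc (pb p) (ccof M) = ccof M"
  by (cases M) auto
lemma map_cc_bnd_ccof: "map_cc (bnd m r) (ccof M) = (if m \<in> fn_cap M then map_cc (bnd m r) (ccof M) else ccof M)"
  by (cases M) auto

lemma eqv_amb: "eqv r F G \<Longrightarrow> eqv r {#TAmb (FN m) F#} {#TAmb (FN m) G#}"
  unfolding eqv_def by auto

lemma eqv_act: "eqv r F G \<Longrightarrow> eqv r {#TAct (ccof M) F#} {#TAct (ccof M) G#}"
  unfolding eqv_def by auto

lemma eqv_res: "eqv r F G \<Longrightarrow> eqv (Suc r) (mapf (bnd m r) F) (mapf (bnd m r) G)"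
  unfolding eqv_def
proof (elim exE conjE)
  fix p assume p: "p permutes {..<r}" and G: "G = mapf (pb p) F"
  have pr: "p r = r" using p by (auto intro: permutes_not_in)
  have "mapf (bnd m r) G = mapf (pb p) (mapf (bnd m r) F)"
    unfolding G mapf_comp
    by (rule mapf_cong) (auto simp: pb_def bnd_def pr split: cn.splits)
  moreover have "p permutes {..<Suc r}" using p by (rule permutes_subset) auto
  ultimately show "\<exists>p. p permutes {..<Suc r} \<and> mapf (bnd m r) G = mapf (pb p) (mapf (bnd m r) F)"
    by auto
qed

lemma permutes_lt: "p permutes {..<r} \<Longrightarrow> i < r \<Longrightarrow> p i < r"
  by (metis lessThan_iff permutes_in_image)

lemma eqv_par:
  assumes "eqv r1 F1 G1" "eqv r2 F2 G2" "wff r1 F1"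
  shows "eqv (r1+r2) (F1 + mapf (shb r1) F2) (G1 + mapf (shb r1) G2)"
proof -
  obtain p1 where p1: "p1 permutes {..<r1}" "G1 = mapf (pb p1) F1" using assms(1) by (auto simp: eqv_def)
  obtain p2 where p2: "p2 permutes {..<r2}" "G2 = mapf (pb p2) F2" using assms(2) by (auto simp: eqv_def)
  define p where "p = (\<lambda>i. if i < r1 then p1 i else if i < r1 + r2 then p2 (i - r1) + r1 else i)"
  have i1: "inj p1" "inj p2" using p1(1) p2(1) permutes_inj by auto
  have "p permutes {..<r1+r2}"
  proof (rule inj_imp_permutes)
    show "inj_on p {..<r1 + r2}"
    proof (rule inj_onI)
      fix x y assume xy: "x \<in> {..<r1 + r2}" "y \<in> {..<r1 + r2}" "p x = p y"
      show "x = y"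
      proof (cases "x < r1"; cases "y < r1")
        assume "x < r1" "y < r1" then show ?thesis using xy i1 by (auto simp: p_def inj_eq)
      next
        assume a: "x < r1" "\<not> y < r1" then show ?thesis using xy permutes_lt[OF p1(1), of x] by (auto simp: p_def)
      next
        assume a: "\<not> x < r1" "y < r1" then show ?thesis using xy permutes_lt[OF p1(1), of y] by (auto simp: p_def)
      next
        assume a: "\<not> x < r1" "\<not> y < r1"
        then have "p2 (x - r1) = p2 (y - r1)" using xy by (auto simp: p_def)
        then have "x - r1 = y - r1" using i1(2) by (simp add: inj_eq)
        then show ?thesis using a by simp
      qed
    qed
    show "\<And>x. x \<in> {..<r1 + r2} \<Longrightarrow> p x \<in> {..<r1 + r2}"
      unfolding p_def using permutes_lt[OF p1(1)] permutes_lt[OF p2(1)] by (auto simp: less_imp_le_nat trans_less_add1)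
  qed (auto simp: p_def)
  moreover have "mapf (pb p) F1 = G1" unfolding p1(2)
    by (rule mapf_cong) (use assms(3) in \<open>auto simp: p_def wff_def pb_def split: cn.splits\<close>)
  moreover have "mapf (pb p) (mapf (shb r1) F2) = mapf (shb r1) G2" unfolding p2(2) mapf_comp
    by (rule mapf_cong) (auto simp: p_def pb_def shb_def split: cn.splits intro: permutes_not_in[OF p2(1), symmetric])
  ultimately show ?thesis unfolding eqv_def by (intro exI[of _ p]) auto
qed

lemma eqv_comm:
  assumes "wff r1 F1" "wff r2 F2"
  shows "eqv (r1+r2) (F1 + mapf (shb r1) F2) (F2 + mapf (shb r2) F1)"
proof -
  define p where "p = (\<lambda>i. if i < r1 then i + r2 else if i < r1 + r2 then i - r1 else i)"
  have "p permutes {..<r1+r2}"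
  proof (rule inj_imp_permutes)
    show "inj_on p {..<r1 + r2}"
      unfolding inj_on_def p_def by auto
  qed (auto simp: p_def)
  moreover have "mapf (pb p) F1 = mapf (shb r2) F1"
    by (rule mapf_cong) (use assms(1) in \<open>auto simp: p_def wff_def pb_def shb_def split: cn.splits\<close>)
  moreover have "mapf (pb p) (mapf (shb r1) F2) = F2" unfolding mapf_comp
    by (rule mapf_id) (use assms(2) in \<open>auto simp: p_def wff_def pb_def shb_def split: cn.splits\<close>)
  ultimately show ?thesis unfolding eqv_def by (intro exI[of _ p]) (auto simp: add_ac)
qed

lemma eqv_resres:
  assumes "wff r F"
  shows "eqv (Suc (Suc r)) (mapf (bnd n (Suc r)) (mapf (bnd m r) F)) (mapf (bnd m (Suc r)) (mapf (bnd n r) F))"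
proof (cases "n = m")
  case True
  have "mapf (bnd n (Suc r)) (mapf (bnd m r) F) = mapf (bnd m (Suc r)) (mapf (bnd n r) F)"
    unfolding mapf_comp True by (rule mapf_cong) (auto simp: bnd_def)
  then show ?thesis by (simp add: eqv_refl)
next
  case False
  have "mapf (pb (transpose r (Suc r))) (mapf (bnd n (Suc r)) (mapf (bnd m r) F)) = mapf (bnd m (Suc r)) (mapf (bnd n r) F)"
    unfolding mapf_comp
    by (rule mapf_cong) (use assms False in \<open>auto simp: wff_def bnd_def pb_def split: cn.splits\<close>)
  moreover have "transpose r (Suc r) permutes {..<Suc (Suc r)}" by (rule permutes_swap_id) auto
  ultimately show ?thesis unfolding eqv_def by (intro exI[of _ "transpose r (Suc r)"]) simp
qed

lemma shb_comp[simp]: "shb a \<circ> shb b = shb (a + b)"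
  by (auto simp: fun_eq_iff shb_def split: cn.splits)

definition rnm :: "name \<Rightarrow> name \<Rightarrow> cn \<Rightarrow> cn" where
  "rnm n m x = (if x = FN n then FN m else x)"

lemma fn_names: "fn P \<subseteq> names P"
  by (induction P) auto

lemma nres_subst[simp]: "nres (subst m n P) = nres P"
  by (induction P) auto

lemma ccof_subst: "ccof (subst_cap m n M) = map_cc (rnm n m) (ccof M)"
  by (cases M) (auto simp: rnm_def rn_def)

lemma cf_subst: "m \<notin> names P \<Longrightarrow> cf (subst m n P) = mapf (rnm n m) (cf P)"
proof (induction P)
  case (Amb k P) then show ?case by (auto simp: rnm_def rn_def)
next
  case (Act M P) then show ?case by (auto simp: ccof_subst)
next
  case (Res k P)
  show ?case
  proof (cases "k = n")
    case True then show ?thesis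
      by (auto simp: mapf_comp intro!: mapf_cong[symmetric]) (auto simp: rnm_def bnd_def)
  next
    case False
    with Res have "k \<noteq> m" by auto
    with Res False show ?thesis
      by (auto simp: mapf_comp intro!: mapf_cong) (auto simp: rnm_def bnd_def)
  qed
next
  case (Par P Q) then show ?case
    by (auto simp: mapf_comp intro!: mapf_cong) (auto simp: rnm_def shb_def split: cn.splits)
qed auto

lemma scong_canon: "scong P Q \<Longrightarrow> nres P = nres Q \<and> eqv (nres P) (cf P) (cf Q)"
proof (induction rule: scong.induct)
  case (sc_refl P) then show ?case by (simp add: eqv_refl)
next
  case (sc_sym P Q) then show ?case by (auto intro: eqv_sym)
next
  case (sc_trans P Q R) then show ?case by (auto intro: eqv_trans)
next
  case (sc_amb P Q n) then show ?case by (auto intro: eqv_amb)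
next
  case (sc_act P Q M) then show ?case by (auto intro: eqv_act)
next
  case (sc_res P Q n) then show ?case by (auto intro: eqv_res)
next
  case (sc_par P P' Q Q')
  then have "eqv (nres P + nres Q) (cf P + mapf (shb (nres P)) (cf Q)) (cf P' + mapf (shb (nres P)) (cf Q'))"
    by (intro eqv_par wff_cf) auto
  then show ?case using sc_par by simp
next
  case (sc_par_comm P Q) then show ?case
    using eqv_comm[OF wff_cf wff_cf] by (simp add: add.commute)
next
  case (sc_par_assoc P Q R) then show ?case
    by (simp add: eqv_refl add_ac)
next
  case (sc_par_nil P) then show ?case by (simp add: eqv_refl)
next
  case (sc_res_res n m P) then show ?case using eqv_resres[OF wff_cf, of P n m] by simp
next
  case (sc_res_par n P Q)
  have "mapf (bnd n (nres P + nres Q)) (cf P) = cf P"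
    by (rule mapf_id) (use sc_res_par fn_cf in \<open>auto simp: bnd_def\<close>)
  moreover have "mapf (bnd n (nres P + nres Q)) (mapf (shb (nres P)) (cf Q)) = mapf (shb (nres P)) (mapf (bnd n (nres Q)) (cf Q))"
    unfolding mapf_comp by (rule mapf_cong) (auto simp: bnd_def shb_def split: cn.splits)
  ultimately show ?case by (simp add: eqv_refl)
next
  case (sc_res_amb n m P) then show ?case by (simp add: eqv_refl)
next
  case (sc_res_act n M P) then show ?case by (cases M) (auto simp: eqv_refl)
next
  case (sc_alpha m P n)
  have fm: "FN m \<notin> atoms (cf P)" using sc_alpha fn_cf fn_names by blast
  have "mapf (bnd m (nres P)) (mapf (rnm n m) (cf P)) = mapf (bnd n (nres P)) (cf P)"
    unfolding mapf_comp by (rule mapf_cong) (use fm in \<open>auto simp: bnd_def rnm_def\<close>)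
  then show ?case using sc_alpha by (simp add: cf_subst eqv_refl)
qed




inductive fstep :: "forest \<Rightarrow> forest \<Rightarrow> bool" where
  fs_open: "fstep (add_mset (TAct (COpen a) G) (add_mset (TAmb a H) R)) (G + H + R)"
| fs_in: "fstep (add_mset (TAmb a (add_mset (TAct (CIn b) G) H)) (add_mset (TAmb b K) R))
                (add_mset (TAmb b (add_mset (TAmb a (G + H)) K)) R)"
| fs_out: "fstep (add_mset (TAmb b (add_mset (TAmb a (add_mset (TAct (COut b) G) H)) K)) R)
                 (add_mset (TAmb a (G + H)) (add_mset (TAmb b K) R))"
| fs_amb: "fstep G G' \<Longrightarrow> fstep (add_mset (TAmb a G) R) (add_mset (TAmb a G') R)"

lemma fstep_map: "fstep F G \<Longrightarrow> fstep (mapf f F) (mapf f G)"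
proof (induction rule: fstep.induct)
  case (fs_open a G H R) then show ?case using fstep.fs_open by simp
next
  case (fs_in a b G H K R) then show ?case using fstep.fs_in by simp
next
  case (fs_out b a G H K R) then show ?case using fstep.fs_out by simp
next
  case (fs_amb G G' a R) then show ?case using fstep.fs_amb by simp
qed

lemma fstep_frame: "fstep F G \<Longrightarrow> fstep (F + S) (G + S)"
proof (induction rule: fstep.induct)
  case (fs_open a G H R) then show ?case using fstep.fs_open[of a G H "R + S"] by (simp add: add_ac)
next
  case (fs_in a b G H K R) then show ?case using fstep.fs_in[of a b G H K "R + S"] by simp
next
  case (fs_out b a G H K R) then show ?case using fstep.fs_out[of b a G H K "R + S"] by simp
next
  case (fs_amb G G' a R) then show ?case using fstep.fs_amb[of G G' a "R + S"] by simp
qed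

lemma fstep_atoms: "fstep F G \<Longrightarrow> atoms G \<subseteq> atoms F"
  by (induction rule: fstep.induct) auto

lemma eqv_mapf: "q permutes {..<r} \<Longrightarrow> eqv r F (mapf (pb q) F)"
  unfolding eqv_def by auto

lemma red_canon: "red P Q \<Longrightarrow> nres Q = nres P \<and> (\<exists>G. fstep (cf P) G \<and> eqv (nres P) G (cf Q))"
proof (induction rule: red.induct)
  case (red_in n m P Q R)
  have "fstep (cf (Par (Amb n (Par (Act (In m) P) Q)) (Amb m R))) (cf (Amb m (Par (Amb n (Par P Q)) R)))"
    using fstep.fs_in[of "FN n" "FN m" "cf P" "mapf (shb (nres P)) (cf Q)" "mapf (shb (nres P + nres Q)) (cf R)" "{#}"]
    by (simp add: add_mset_commute)
  then show ?case by (auto intro: eqv_refl)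
next
  case (red_out m n P Q R)
  have "fstep (cf (Amb m (Par (Amb n (Par (Act (Out m) P) Q)) R))) (cf (Par (Amb n (Par P Q)) (Amb m R)))"
    using fstep.fs_out[of "FN m" "FN n" "cf P" "mapf (shb (nres P)) (cf Q)" "mapf (shb (nres P + nres Q)) (cf R)" "{#}"]
    by (simp add: add_mset_commute)
  then show ?case by (auto intro: eqv_refl)
next
  case (red_open n P Q)
  have "fstep (cf (Par (Act (Open n) P) (Amb n Q))) (cf (Par P Q))"
    using fstep.fs_open[of "FN n" "cf P" "mapf (shb (nres P)) (cf Q)" "{#}"]
    by (simp add: add_mset_commute)
  then show ?case by (auto intro: eqv_refl)
next
  case (red_res P Q n)
  then obtain G where G: "fstep (cf P) G" "eqv (nres P) G (cf Q)" by auto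
  then show ?case using red_res fstep_map[OF G(1), of "bnd n (nres P)"] eqv_res[OF G(2), of n] by auto
next
  case (red_amb P Q n)
  then obtain G where G: "fstep (cf P) G" "eqv (nres P) G (cf Q)" by auto
  then show ?case using red_amb fstep.fs_amb[OF G(1), of "FN n" "{#}"] eqv_amb[OF G(2), of n] by auto
next
  case (red_par P Q R)
  then obtain G where G: "fstep (cf P) G" "eqv (nres P) G (cf Q)" by auto
  have w: "wff (nres P) G" using fstep_atoms[OF G(1)] wff_cf[of P] by (auto simp: wff_def)
  show ?case using red_par fstep_frame[OF G(1)] eqv_par[OF G(2) eqv_refl w] by auto
next
  case (red_scong P P' Q' Q)
  then obtain G where G: "fstep (cf P') G" "eqv (nres P') G (cf Q')" by auto
  have c1: "nres P = nres P'" "eqv (nres P) (cf P') (cf P)" using scong_canon[OF red_scong(1)] eqv_sym by auto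
  have c2: "nres Q' = nres Q" "eqv (nres Q') (cf Q') (cf Q)" using scong_canon[OF red_scong(3)] by auto
  obtain q where q: "q permutes {..<nres P}" "cf P = mapf (pb q) (cf P')" using c1(2) by (auto simp: eqv_def)
  have "fstep (cf P) (mapf (pb q) G)" using fstep_map[OF G(1)] q by simp
  moreover have "eqv (nres P) (mapf (pb q) G) (cf Q)"
    using eqv_sym[OF eqv_mapf[OF q(1), of G]] G(2) c1 c2 red_scong by (auto intro: eqv_trans)
  ultimately show ?case using c1 c2 red_scong by auto
qed




lemmas sc_trans' [trans] = sc_trans

lemma sc_parL: "scong P P' \<Longrightarrow> scong (Par P Q) (Par P' Q)"
  by (rule sc_par) (auto intro: sc_refl)
lemma sc_parR: "scong Q Q' \<Longrightarrow> scong (Par P Q) (Par P Q')"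
  by (rule sc_par) (auto intro: sc_refl)
lemma sc_lcomm: "scong (Par A (Par B C)) (Par B (Par A C))"
proof -
  have "scong (Par A (Par B C)) (Par (Par A B) C)" by (rule sc_sym, rule sc_par_assoc)
  also have "scong \<dots> (Par (Par B A) C)" by (rule sc_parL, rule sc_par_comm)
  also have "scong \<dots> (Par B (Par A C))" by (rule sc_par_assoc)
  finally show ?thesis .
qed
lemma sc_nil_par: "scong (Par Nil P) P"
  using sc_trans[OF sc_par_comm sc_par_nil] .

subsection \<open>iterated restriction\<close>

lemma resl_append: "resl (A @ B) X = resl A (resl B X)"
  by (induction A) auto

lemma resl_cong: "scong X Y \<Longrightarrow> scong (resl A X) (resl A Y)"
  by (induction A) (auto intro: sc_res)

lemma fn_resl[simp]: "fn (resl A X) = fn X - set A"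
  by (induction A) auto
lemma names_resl[simp]: "names (resl A X) = names X \<union> set A"
  by (induction A) auto
lemma nres_resl[simp]: "nres (resl A X) = nres X + length A"
  by (induction A) auto

lemma amb_resl: "m \<notin> set A \<Longrightarrow> scong (Amb m (resl A X)) (resl A (Amb m X))"
proof (induction A)
  case (Cons a A)
  have "scong (Amb m (Res a (resl A X))) (Res a (Amb m (resl A X)))"
    by (rule sc_sym, rule sc_res_amb) (use Cons.prems in auto)
  also have "scong \<dots> (Res a (resl A (Amb m X)))" using Cons by (intro sc_res) auto
  finally show ?case by simp
qed (auto intro: sc_refl)

lemma act_resl: "set A \<inter> fn_cap M = {} \<Longrightarrow> scong (Act M (resl A X)) (resl A (Act M X))"
proof (induction A)
  case (Cons a A)
  have "scong (Act M (Res a (resl A X))) (Res a (Act M (resl A X)))"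
    by (rule sc_sym, rule sc_res_act) (use Cons.prems in auto)
  also have "scong \<dots> (Res a (resl A (Act M X)))" using Cons by (intro sc_res) auto
  finally show ?case by simp
qed (auto intro: sc_refl)

lemma par_resl: "set A \<inter> fn R = {} \<Longrightarrow> scong (Par R (resl A X)) (resl A (Par R X))"
proof (induction A)
  case (Cons a A)
  have "scong (Par R (Res a (resl A X))) (Res a (Par R (resl A X)))"
    by (rule sc_sym, rule sc_res_par) (use Cons.prems in auto)
  also have "scong \<dots> (Res a (resl A (Par R X)))" using Cons by (intro sc_res) auto
  finally show ?case by simp
qed (auto intro: sc_refl)

lemma par_resl_l: "set A \<inter> fn R = {} \<Longrightarrow> scong (Par (resl A X) R) (resl A (Par X R))"
proof -
  assume a: "set A \<inter> fn R = {}"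
  have "scong (Par (resl A X) R) (Par R (resl A X))" by (rule sc_par_comm)
  also have "scong \<dots> (resl A (Par R X))" using a by (rule par_resl)
  also have "scong \<dots> (resl A (Par X R))" by (rule resl_cong, rule sc_par_comm)
  finally show ?thesis .
qed

lemma subst_resl: "m \<notin> set A \<Longrightarrow> subst c m (resl A X) = resl A (subst c m X)"
  by (induction A) auto

subsection \<open>Reification of name forests\<close>

fun capof :: "name cc \<Rightarrow> cap" where
  "capof (CIn a) = In a" | "capof (COut a) = Out a" | "capof (COpen a) = Open a"

definition pm :: "proc multiset \<Rightarrow> proc" where
  "pm M = foldr Par (SOME xs. mset xs = M) Nil"

primrec rt :: "name tree \<Rightarrow> proc" where
  "rt (TAmb a M) = Amb a (pm (image_mset rt M))"
| "rt (TAct c M) = Act (capof c) (pm (image_mset rt M))"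

definition rf :: "name tree multiset \<Rightarrow> proc" where
  "rf M = pm (image_mset rt M)"

lemma rt_simps': "rt (TAmb a M) = Amb a (rf M)" "rt (TAct c M) = Act (capof c) (rf M)"
  by (auto simp: rf_def)

lemma fold_move: "scong (foldr Par (ys1 @ x # ys2) Nil) (Par x (foldr Par (ys1 @ ys2) Nil))"
proof (induction ys1)
  case Nil then show ?case by (auto intro: sc_refl)
next
  case (Cons y ys1)
  have "scong (Par y (foldr Par (ys1 @ x # ys2) Nil)) (Par y (Par x (foldr Par (ys1 @ ys2) Nil)))"
    using Cons by (rule sc_parR)
  also have "scong \<dots> (Par x (Par y (foldr Par (ys1 @ ys2) Nil)))" by (rule sc_lcomm)
  finally show ?case by simp
qed

lemma fold_perm: "mset xs = mset ys \<Longrightarrow> scong (foldr Par xs Nil) (foldr Par ys Nil)"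
proof (induction xs arbitrary: ys)
  case Nil then show ?case by (auto intro: sc_refl)
next
  case (Cons x xs)
  then have "x \<in> set ys" by (metis list.set_intros(1) set_mset_mset)
  then obtain ys1 ys2 where ys: "ys = ys1 @ x # ys2" by (meson split_list)
  with Cons have "mset xs = mset (ys1 @ ys2)" by simp
  then have "scong (foldr Par xs Nil) (foldr Par (ys1 @ ys2) Nil)" using Cons by blast
  then have "scong (Par x (foldr Par xs Nil)) (Par x (foldr Par (ys1 @ ys2) Nil))" by (rule sc_parR)
  also have "scong \<dots> (foldr Par ys Nil)" unfolding ys by (rule sc_sym, rule fold_move)
  finally show ?case by simp
qed

lemma pm_list: "mset xs = M \<Longrightarrow> scong (pm M) (foldr Par xs Nil)"
  unfolding pm_def by (rule fold_perm) (metis (mono_tags, lifting) ex_mset someI_ex)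

lemma pm_empty[simp]: "pm {#} = Nil"
  unfolding pm_def by simp

lemma fold_append: "scong (foldr Par (xs @ ys) Nil) (Par (foldr Par xs Nil) (foldr Par ys Nil))"
proof (induction xs)
  case Nil then show ?case by (simp add: sc_sym[OF sc_nil_par])
next
  case (Cons x xs)
  have "scong (Par x (foldr Par (xs @ ys) Nil)) (Par x (Par (foldr Par xs Nil) (foldr Par ys Nil)))"
    using Cons by (rule sc_parR)
  also have "scong \<dots> (Par (Par x (foldr Par xs Nil)) (foldr Par ys Nil))" by (rule sc_sym, rule sc_par_assoc)
  finally show ?case by simp
qed

lemma pm_plus: "scong (pm (M + N)) (Par (pm M) (pm N))"
proof -
  obtain xs ys where xs: "mset xs = M" and ys: "mset ys = N" by (meson ex_mset)
  have "scong (pm (M + N)) (foldr Par (xs @ ys) Nil)" using xs ys by (intro pm_list) simp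
  also have "scong \<dots> (Par (foldr Par xs Nil) (foldr Par ys Nil))" by (rule fold_append)
  also have "scong \<dots> (Par (pm M) (pm N))"
    using sc_par[OF sc_sym[OF pm_list[OF xs]] sc_sym[OF pm_list[OF ys]]] .
  finally show ?thesis .
qed

lemma pm_single: "scong (pm {#P#}) P"
proof -
  have "scong (pm {#P#}) (foldr Par [P] Nil)" by (rule pm_list) simp
  then show ?thesis using sc_par_nil sc_trans by fastforce
qed

lemma pm_add: "scong (pm (add_mset P M)) (Par P (pm M))"
proof -
  have "scong (pm ({#P#} + M)) (Par (pm {#P#}) (pm M))" by (rule pm_plus)
  also have "scong \<dots> (Par P (pm M))" by (rule sc_parL, rule pm_single)
  finally show ?thesis by simp
qed

lemma fold_pointwise: "(\<And>x. x \<in> set xs \<Longrightarrow> scong (f x) (g x)) \<Longrightarrow>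
   scong (foldr Par (map f xs) Nil) (foldr Par (map g xs) Nil)"
  by (induction xs) (auto intro: sc_refl sc_par)

lemma pm_pointwise: "(\<And>x. x \<in># M \<Longrightarrow> scong (f x) (g x)) \<Longrightarrow>
   scong (pm (image_mset f M)) (pm (image_mset g M))"
proof -
  assume a: "\<And>x. x \<in># M \<Longrightarrow> scong (f x) (g x)"
  obtain xs where xs: "mset xs = M" by (meson ex_mset)
  have "scong (pm (image_mset f M)) (foldr Par (map f xs) Nil)" using xs by (intro pm_list) simp
  also have "scong \<dots> (foldr Par (map g xs) Nil)" using a xs by (intro fold_pointwise) auto
  also have "scong \<dots> (pm (image_mset g M))" using xs by (intro pm_list[THEN sc_sym]) simp
  finally show ?thesis .
qed

lemma rf_empty[simp]: "rf {#} = Nil" by (simp add: rf_def)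
lemma rf_plus: "scong (rf (M + N)) (Par (rf M) (rf N))"
  unfolding rf_def using pm_plus by simp
lemma rf_add: "scong (rf (add_mset t M)) (Par (rt t) (rf M))"
  unfolding rf_def using pm_add by simp
lemma rf_single: "scong (rf {#t#}) (rt t)"
  unfolding rf_def using pm_single by simp

lemma names_fold: "names (foldr Par xs Nil) = \<Union> (names ` set xs)"
  by (induction xs) auto
lemma fn_fold: "fn (foldr Par xs Nil) = \<Union> (fn ` set xs)"
  by (induction xs) auto
lemma nres_fold: "nres (foldr Par xs Nil) = sum_list (map nres xs)"
  by (induction xs) auto

lemma some_mset: "mset (SOME xs. mset xs = M) = M"
  by (metis (mono_tags, lifting) ex_mset someI_ex)

lemma names_pm: "names (pm M) = \<Union> (names ` set_mset M)"
  unfolding pm_def names_fold by (metis set_mset_mset some_mset)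
lemma fn_pm: "fn (pm M) = \<Union> (fn ` set_mset M)"
  unfolding pm_def fn_fold by (metis set_mset_mset some_mset)

lemma fn_cap_capof[simp]: "fn_cap (capof c) = set_cc c"
  by (cases c) auto

lemma names_rt: "names (rt t) = set_tree t" and fn_rt: "fn (rt t) = set_tree t"
proof (induction t)
  case (TAmb a M)
  have e1: "names (pm (image_mset rt M)) = atoms M" "fn (pm (image_mset rt M)) = atoms M"
    unfolding names_pm fn_pm atoms_def using TAmb by auto
  { case 1 then show ?case using e1 by (simp add: set_tree_TAmb) }
  { case 2 then show ?case using e1 by (simp add: set_tree_TAmb) }
next
  case (TAct c M)
  have e1: "names (pm (image_mset rt M)) = atoms M" "fn (pm (image_mset rt M)) = atoms M"
    unfolding names_pm fn_pm atoms_def using TAct by auto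
  { case 1 then show ?case using e1 by (simp add: set_tree_TAct) }
  { case 2 then show ?case using e1 by (simp add: set_tree_TAct) }
qed

lemma names_rf: "names (rf M) = atoms M" and fn_rf: "fn (rf M) = atoms M"
  unfolding rf_def names_pm fn_pm atoms_def by (auto simp: names_rt fn_rt)




lemma subst_fold: "subst c d (foldr Par xs Nil) = foldr Par (map (subst c d) xs) Nil"
  by (induction xs) auto

lemma subst_pm: "scong (subst c d (pm K)) (pm (image_mset (subst c d) K))"
proof -
  have "subst c d (pm K) = foldr Par (map (subst c d) (SOME xs. mset xs = K)) Nil"
    unfolding pm_def subst_fold ..
  also have "scong \<dots> (pm (image_mset (subst c d) K))"
    by (rule sc_sym, rule pm_list) (simp add: some_mset)
  finally show ?thesis .
qed

lemma subst_capof: "subst_cap c d (capof x) = capof (map_cc (rn c d) x)"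
  by (cases x) auto

lemma subst_rt: "scong (subst c d (rt t)) (rt (map_tree (rn c d) t))"
proof (induction t)
  case (TAmb a M)
  have "scong (subst c d (pm (image_mset rt M))) (pm (image_mset (subst c d) (image_mset rt M)))"
    by (rule subst_pm)
  also have "scong \<dots> (pm (image_mset (rt \<circ> map_tree (rn c d)) M))"
    unfolding image_mset.compositionality using TAmb by (intro pm_pointwise) auto
  finally show ?case by (auto simp: mapf_def image_mset.compositionality intro: sc_amb)
next
  case (TAct x M)
  have "scong (subst c d (pm (image_mset rt M))) (pm (image_mset (subst c d) (image_mset rt M)))"
    by (rule subst_pm)
  also have "scong \<dots> (pm (image_mset (rt \<circ> map_tree (rn c d)) M))"
    unfolding image_mset.compositionality using TAct by (intro pm_pointwise) auto
  finally show ?case by (auto simp: mapf_def image_mset.compositionality subst_capof intro: sc_act)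
qed

lemma subst_rf: "scong (subst c d (rf M)) (rf (mapf (rn c d) M))"
proof -
  have "scong (subst c d (pm (image_mset rt M))) (pm (image_mset (subst c d) (image_mset rt M)))"
    by (rule subst_pm)
  also have "scong \<dots> (pm (image_mset (rt \<circ> map_tree (rn c d)) M))"
    unfolding image_mset.compositionality by (intro pm_pointwise) (auto intro: subst_rt)
  finally show ?thesis by (simp add: rf_def mapf_def image_mset.compositionality)
qed

lemma shb0[simp]: "shb 0 = id" by (auto simp: fun_eq_iff shb_def split: cn.splits)
lemma mapf_id0[simp]: "mapf id M = M" by (simp add: mapf_def tree.map_id0)

lemma cf_fold: "(\<forall>x\<in>set xs. nres x = 0) \<Longrightarrow> nres (foldr Par xs Nil) = 0 \<and> cf (foldr Par xs Nil) = sum_list (map cf xs)"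
  by (induction xs) auto

lemma cf_pm: "(\<forall>x\<in>#K. nres x = 0) \<Longrightarrow> nres (pm K) = 0 \<and> cf (pm K) = sum_mset (image_mset cf K)"
proof -
  assume a: "\<forall>x\<in>#K. nres x = 0"
  let ?xs = "SOME xs. mset xs = K"
  have m: "mset ?xs = K" by (rule some_mset)
  have "\<forall>x\<in>set ?xs. nres x = 0" using a m by (metis set_mset_mset)
  from cf_fold[OF this] show ?thesis unfolding pm_def
    by (metis m mset_map sum_mset_sum_list)
qed

lemma sum_single: "sum_mset (image_mset (\<lambda>x. {#f x#}) M) = image_mset f M"
  by (induction M) auto

lemma sum_cf: "(\<And>t. t \<in># M \<Longrightarrow> cf (rt t) = {#map_tree FN t#}) \<Longrightarrow>
  sum_mset (image_mset cf (image_mset rt M)) = image_mset (map_tree FN) M"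
  by (induction M) auto

lemma cf_rt: "nres (rt t) = 0 \<and> cf (rt t) = {#map_tree FN t#}"
proof (induction t)
  case (TAmb a M)
  have "nres (pm (image_mset rt M)) = 0 \<and> cf (pm (image_mset rt M)) = sum_mset (image_mset cf (image_mset rt M))"
    using TAmb by (intro cf_pm) auto
  moreover have "sum_mset (image_mset cf (image_mset rt M)) = image_mset (map_tree FN) M"
    using TAmb by (intro sum_cf) auto
  ultimately show ?case by (simp add: mapf_def tree.map)
next
  case (TAct c M)
  have "nres (pm (image_mset rt M)) = 0 \<and> cf (pm (image_mset rt M)) = sum_mset (image_mset cf (image_mset rt M))"
    using TAct by (intro cf_pm) auto
  moreover have "sum_mset (image_mset cf (image_mset rt M)) = image_mset (map_tree FN) M"
    using TAct by (intro sum_cf) auto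
  moreover have "ccof (capof c) = map_cc FN c" by (cases c) auto
  ultimately show ?case by (simp add: sum_single mapf_def tree.map)
qed

lemma cf_rf: "nres (rf M) = 0 \<and> cf (rf M) = mapf FN M"
proof -
  have "nres (pm (image_mset rt M)) = 0 \<and> cf (pm (image_mset rt M)) = sum_mset (image_mset cf (image_mset rt M))"
    using cf_rt by (intro cf_pm) auto
  moreover have "sum_mset (image_mset cf (image_mset rt M)) = image_mset (map_tree FN) M"
    using cf_rt by (intro sum_cf) auto
  ultimately show ?thesis by (simp add: mapf_def rf_def)
qed




definition sg :: "nat \<Rightarrow> cn \<Rightarrow> name" where
  "sg N x = (case x of FN a \<Rightarrow> a | BN i \<Rightarrow> N + i)"
lemma sg_simps[simp]: "sg N (FN a) = a" "sg N (BN i) = N + i" by (auto simp: sg_def)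

definition nfn :: "nat \<Rightarrow> nat \<Rightarrow> forest \<Rightarrow> proc" where
  "nfn N r F = resl (rev [N..<N+r]) (rf (mapf (sg N) F))"

lemma capof_ccof: "capof (map_cc (sg N) (ccof M)) = M"
  by (cases M) auto

lemma atoms_sg_cf: "(\<forall>a\<in>names P. a < N) \<Longrightarrow> x \<in> atoms (mapf (sg N) (cf P)) \<Longrightarrow> x < N + nres P \<and> (x < N \<longrightarrow> x \<in> fn P)"
proof -
  assume a: "\<forall>a\<in>names P. a < N" and x: "x \<in> atoms (mapf (sg N) (cf P))"
  then obtain y where y: "y \<in> atoms (cf P)" "x = sg N y" by auto
  show ?thesis
  proof (cases y)
    case (FN b) then show ?thesis using y a fn_cf[of b P] fn_names[of P] by force
  next
    case (BN i) then show ?thesis using y wf_cf[of i P] by auto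
  qed
qed

theorem nf: "(\<forall>a\<in>names P. a < N) \<Longrightarrow> scong P (nfn N (nres P) (cf P))"
proof (induction P arbitrary: N)
  case Nil then show ?case by (simp add: nfn_def sc_refl)
next
  case (Amb m P)
  let ?Bs = "rev [N..<N + nres P]" and ?X = "rf (mapf (sg N) (cf P))"
  have "scong (Amb m P) (Amb m (resl ?Bs ?X))" using Amb by (auto simp: nfn_def intro: sc_amb)
  also have "scong \<dots> (resl ?Bs (Amb m ?X))" using Amb.prems by (intro amb_resl) auto
  also have "scong \<dots> (resl ?Bs (rf {#TAmb m (mapf (sg N) (cf P))#}))"
    by (rule resl_cong, rule sc_sym) (metis rf_single rt_simps'(1))
  finally show ?case by (simp add: nfn_def)
next
  case (Act M P)
  have fm: "\<And>a. a \<in> fn_cap M \<Longrightarrow> a < N" using Act.prems by simp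
  let ?Bs = "rev [N..<N + nres P]" and ?X = "rf (mapf (sg N) (cf P))"
  have "scong (Act M P) (Act M (resl ?Bs ?X))" using Act by (auto simp: nfn_def intro: sc_act)
  also have "scong \<dots> (resl ?Bs (Act M ?X))" by (intro act_resl) (use fm in \<open>fastforce\<close>)
  also have "scong \<dots> (resl ?Bs (rf {#TAct (map_cc (sg N) (ccof M)) (mapf (sg N) (cf P))#}))"
    by (rule resl_cong, rule sc_sym) (metis rf_single rt_simps'(2) capof_ccof)
  finally show ?case by (simp add: nfn_def)
next
  case (Res m P)
  let ?r = "nres P"
  let ?Bs = "rev [N..<N + ?r]" and ?X = "rf (mapf (sg N) (cf P))"
  have mN: "m < N" using Res.prems by auto
  have nP: "\<forall>a\<in>names P. a < N" using Res.prems by auto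
  have "scong (Res m P) (Res m (resl ?Bs ?X))" using Res.IH[OF nP] by (auto simp: nfn_def intro: sc_res)
  also have "scong \<dots> (Res (N + ?r) (subst (N + ?r) m (resl ?Bs ?X)))"
  proof (rule sc_alpha)
    show "N + ?r \<notin> names (resl ?Bs ?X)"
      using atoms_sg_cf[OF nP] by (auto simp: names_rf)
  qed
  also have "subst (N + ?r) m (resl ?Bs ?X) = resl ?Bs (subst (N + ?r) m ?X)"
    using mN by (intro subst_resl) auto
  also have "scong (Res (N + ?r) (resl ?Bs (subst (N + ?r) m ?X)))
                   (Res (N + ?r) (resl ?Bs (rf (mapf (rn (N + ?r) m) (mapf (sg N) (cf P))))))"
    by (intro sc_res resl_cong subst_rf)
  also have "mapf (rn (N + ?r) m) (mapf (sg N) (cf P)) = mapf (sg N) (mapf (bnd m ?r) (cf P))"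
    unfolding mapf_comp
  proof (rule mapf_cong)
    fix x assume "x \<in> atoms (cf P)"
    then show "(rn (N + ?r) m \<circ> sg N) x = (sg N \<circ> bnd m ?r) x"
      using mN by (cases x) (auto simp: rn_def bnd_def)
  qed
  finally show ?case by (simp add: nfn_def)
next
  case (Par P Q)
  let ?rP = "nres P" and ?rQ = "nres Q"
  let ?BP = "rev [N..<N + ?rP]" and ?BQ = "rev [N + ?rP..<N + ?rP + ?rQ]"
  let ?XP = "rf (mapf (sg N) (cf P))" and ?XQ = "rf (mapf (sg (N + ?rP)) (cf Q))"
  have nP: "\<forall>a\<in>names P. a < N" and nQ: "\<forall>a\<in>names Q. a < N + ?rP" using Par.prems by (auto simp: trans_less_add1)
  have "scong (Par P Q) (Par (resl ?BP ?XP) (resl ?BQ ?XQ))"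
    using Par.IH(1)[OF nP] Par.IH(2)[OF nQ] by (auto simp: nfn_def intro: sc_par)
  also have "scong \<dots> (resl ?BQ (Par (resl ?BP ?XP) ?XQ))"
    by (rule par_resl) (use atoms_sg_cf[OF nP] in \<open>auto simp: fn_rf\<close>)
  also have "scong \<dots> (resl ?BQ (resl ?BP (Par ?XP ?XQ)))"
  proof (rule resl_cong, rule par_resl_l)
    have "x < N \<or> N + ?rP \<le> x" if "x \<in> atoms (mapf (sg (N + ?rP)) (cf Q))" for x
    proof -
      have "x < N + ?rP \<longrightarrow> x \<in> fn Q" using atoms_sg_cf[OF nQ that] by auto
      moreover have "\<forall>a\<in>fn Q. a < N" using Par.prems fn_names[of Q] by auto
      ultimately show ?thesis by force
    qed
    then show "set ?BP \<inter> fn ?XQ = {}" by (force simp: fn_rf)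
  qed
  also have "scong \<dots> (resl ?BQ (resl ?BP (rf (mapf (sg N) (cf P) + mapf (sg (N + ?rP)) (cf Q)))))"
    by (rule resl_cong, rule resl_cong, rule sc_sym, rule rf_plus)
  also have "mapf (sg (N + ?rP)) (cf Q) = mapf (sg N) (mapf (shb ?rP) (cf Q))"
    unfolding mapf_comp by (rule mapf_cong) (auto simp: sg_def shb_def split: cn.splits)
  also have "resl ?BQ (resl ?BP (rf (mapf (sg N) (cf P) + mapf (sg N) (mapf (shb ?rP) (cf Q)))))
     = nfn N (nres (Par P Q)) (cf (Par P Q))"
  proof -
    have "rev [N..<N + (?rP + ?rQ)] = ?BQ @ ?BP"
      by (metis add.assoc le_add1 rev_append upt_add_eq_append)
    then show ?thesis by (simp add: nfn_def resl_append)
  qed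
  finally show ?case .
qed




lemma res_resl: "scong (Res a (resl A W)) (resl A (Res a W))"
proof (induction A)
  case Nil then show ?case by (simp add: sc_refl)
next
  case (Cons b A)
  have "scong (Res a (Res b (resl A W))) (Res b (Res a (resl A W)))" by (rule sc_res_res)
  also have "scong \<dots> (Res b (resl A (Res a W)))" using Cons by (rule sc_res)
  finally show ?case by simp
qed

lemma resl_perm: "mset A = mset A' \<Longrightarrow> scong (resl A Z) (resl A' Z)"
proof (induction A arbitrary: A')
  case Nil then show ?case by (simp add: sc_refl)
next
  case (Cons a A)
  then have "a \<in> set A'" by (metis list.set_intros(1) set_mset_mset)
  then obtain A1 A2 where A': "A' = A1 @ a # A2" by (meson split_list)
  with Cons have "mset A = mset (A1 @ A2)" by simp
  then have "scong (resl A Z) (resl (A1 @ A2) Z)" using Cons by blast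
  then have "scong (Res a (resl A Z)) (Res a (resl A1 (resl A2 Z)))" by (simp add: resl_append sc_res)
  also have "scong \<dots> (resl A1 (Res a (resl A2 Z)))" by (rule res_resl)
  finally show ?case by (simp add: A' resl_append)
qed

definition tau :: "name list \<Rightarrow> (nat \<Rightarrow> name) \<Rightarrow> nat \<Rightarrow> cn \<Rightarrow> name" where
  "tau L t0 k x = (case x of FN a \<Rightarrow> a | BN i \<Rightarrow> (if i < k then L ! i else t0 i))"

lemma tau_simps[simp]: "tau L t0 k (FN a) = a" "tau L t0 k (BN i) = (if i < k then L ! i else t0 i)"
  by (auto simp: tau_def)

lemma alpha_gen:
  assumes "length L = k" "length L' = k" "distinct L" "distinct L'" "set L \<inter> set L' = {}"
    and "\<And>a. FN a \<in> atoms F \<Longrightarrow> a \<notin> set L \<union> set L'"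
    and "\<And>i. BN i \<in> atoms F \<Longrightarrow> k \<le> i \<Longrightarrow> t0 i \<notin> set L \<union> set L'"
  shows "scong (resl (rev L) (rf (mapf (tau L t0 k) F))) (resl (rev L') (rf (mapf (tau L' t0 k) F)))"
  using assms
proof (induction k arbitrary: L L' t0)
  case 0 then show ?case by (simp add: sc_refl)
next
  case (Suc k)
  obtain L0 l where L: "L = L0 @ [l]" using Suc.prems(1) by (metis length_Suc_conv_rev)
  obtain L0' l' where L': "L' = L0' @ [l']" using Suc.prems(2) by (metis length_Suc_conv_rev)
  have len: "length L0 = k" "length L0' = k" using Suc.prems L L' by auto
  have dL: "distinct L0" "l \<notin> set L0" "distinct L0'" "l' \<notin> set L0'" using Suc.prems L L' by auto
  have disj: "set L0 \<inter> set L0' = {}" "l \<noteq> l'" "l \<notin> set L0'" "l' \<notin> set L0" using Suc.prems L L' by auto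
  define t1 where "t1 = t0(k := l)"
  define t2 where "t2 = t0(k := l')"
  have eqL: "tau L t0 (Suc k) = tau L0 t1 k" unfolding t1_def
    by (auto simp: fun_eq_iff tau_def L nth_append len split: cn.splits)
  have eqL': "tau L' t0 (Suc k) = tau L0' t2 k" unfolding t2_def
    by (auto simp: fun_eq_iff tau_def L' nth_append len split: cn.splits)
  let ?X = "rf (mapf (tau L0 t1 k) F)"
  have a1: "l' \<notin> names (resl (rev L0) ?X)"
  proof -
    have "l' \<notin> tau L0 t1 k ` atoms F"
    proof
      assume "l' \<in> tau L0 t1 k ` atoms F"
      then obtain x where x: "x \<in> atoms F" "l' = tau L0 t1 k x" by auto
      show False
      proof (cases x)
        case (FN a) then show False using x Suc.prems(6)[of a] L' by auto
      next
        case (BN i)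
        show False
        proof (cases "i < k")
          case True then have "l' \<in> set L0" using x BN len by (auto simp: t1_def)
          then show False using disj by auto
        next
          case False
          show False
          proof (cases "i = k")
            case True then show False using x BN disj by (auto simp: t1_def)
          next
            case False then have "t0 i = l'" "Suc k \<le> i" using x BN \<open>\<not> i < k\<close> by (auto simp: t1_def)
            then show False using Suc.prems(7)[of i] x BN L' by auto
          qed
        qed
      qed
    qed
    then show ?thesis using disj by (auto simp: names_rf)
  qed
  have "resl (rev L) (rf (mapf (tau L t0 (Suc k)) F)) = Res l (resl (rev L0) ?X)"
    unfolding eqL by (simp add: L)
  also have "scong \<dots> (Res l' (subst l' l (resl (rev L0) ?X)))" using a1 by (rule sc_alpha)
  also have "subst l' l (resl (rev L0) ?X) = resl (rev L0) (subst l' l ?X)"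
    using dL by (intro subst_resl) auto
  also have "scong (Res l' (resl (rev L0) (subst l' l ?X))) (Res l' (resl (rev L0) (rf (mapf (rn l' l) (mapf (tau L0 t1 k) F)))))"
    by (intro sc_res resl_cong subst_rf)
  also have "mapf (rn l' l) (mapf (tau L0 t1 k) F) = mapf (tau L0 t2 k) F"
    unfolding mapf_comp
  proof (rule mapf_cong)
    fix x assume x: "x \<in> atoms F"
    show "(rn l' l \<circ> tau L0 t1 k) x = tau L0 t2 k x"
    proof (cases x)
      case (FN a) then show ?thesis using x Suc.prems(6)[of a] L by (auto simp: rn_def)
    next
      case (BN i)
      then show ?thesis using x Suc.prems(7)[of i] L dL len
        by (auto simp: rn_def t1_def t2_def nth_mem)
    qed
  qed
  also have "scong (Res l' (resl (rev L0) (rf (mapf (tau L0 t2 k) F)))) (Res l' (resl (rev L0') (rf (mapf (tau L0' t2 k) F))))"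
  proof (rule sc_res, rule Suc.IH)
    show "length L0 = k" "length L0' = k" "distinct L0" "distinct L0'" "set L0 \<inter> set L0' = {}"
      using len dL disj by auto
    show "\<And>a. FN a \<in> atoms F \<Longrightarrow> a \<notin> set L0 \<union> set L0'" using Suc.prems(6) L L' by auto
    show "\<And>i. BN i \<in> atoms F \<Longrightarrow> k \<le> i \<Longrightarrow> t2 i \<notin> set L0 \<union> set L0'"
      using Suc.prems(7) L L' disj dL by (auto simp: t2_def)
  qed
  also have "Res l' (resl (rev L0') (rf (mapf (tau L0' t2 k) F))) = resl (rev L') (rf (mapf (tau L' t0 (Suc k)) F))"
    unfolding eqL' by (simp add: L')
  finally show ?case .
qed

lemma nf_eqv:
  assumes "wff r F" "\<And>a. FN a \<in> atoms F \<Longrightarrow> a < N" "eqv r F G"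
  shows "scong (nfn N r F) (nfn N r G)"
proof -
  obtain p where p: "p permutes {..<r}" "G = mapf (pb p) F" using assms(3) by (auto simp: eqv_def)
  define L where "L = [N..<N+r]"
  define L' where "L' = map (\<lambda>i. N + p i) [0..<r]"
  define L'' where "L'' = [N+r..<N+r+r]"
  define t0 where "t0 = (\<lambda>i::nat. 0::nat)"
  have inj: "inj p" using p(1) permutes_inj by blast
  have lens: "length L = r" "length L' = r" "length L'' = r" by (auto simp: L_def L'_def L''_def)
  have dist1: "distinct L" "distinct L''" by (simp_all add: L_def L''_def)
  have dist2: "distinct L'" unfolding L'_def distinct_map
    by (auto intro!: inj_onI dest: injD[OF inj])
  note dist = dist1(1) dist2 dist1(2)
  have setL: "set L = {N..<N+r}" by (simp add: L_def)
  have setL'': "set L'' = {N+r..<N+r+r}" by (simp add: L''_def)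
  have setL': "set L' = set L"
  proof -
    have pr: "p ` {..<r} = {..<r}" using p(1) permutes_image by blast
    have "set L' = (\<lambda>i. N + i) ` (p ` {..<r})" by (auto simp: L'_def image_image lessThan_atLeast0)
    also have "\<dots> = (\<lambda>i. N + i) ` {..<r}" by (simp add: pr)
    also have "\<dots> = {N..<N+r}"
    proof (rule set_eqI, rule iffI)
      fix x assume "x \<in> (\<lambda>i. N + i) ` {..<r}" then show "x \<in> {N..<N + r}" by auto
    next
      fix x assume "x \<in> {N..<N+r}" then have "x = N + (x - N)" "x - N < r" by auto
      then show "x \<in> (\<lambda>i. N + i) ` {..<r}" by (metis image_eqI lessThan_iff)
    qed
    finally show ?thesis by (simp add: setL)
  qed
  have m: "mset L' = mset L" using dist setL' by (simp add: set_eq_iff_mset_eq_distinct)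
  have disj: "set L \<inter> set L'' = {}" "set L' \<inter> set L'' = {}" using setL' setL setL'' by auto
  have fr: "\<And>a. FN a \<in> atoms F \<Longrightarrow> a < N" by (rule assms(2))
  have fresh1: "\<And>a. FN a \<in> atoms F \<Longrightarrow> a \<notin> set L' \<union> set L''"
    using setL' setL setL'' fr by fastforce
  have fresh2: "\<And>a. FN a \<in> atoms F \<Longrightarrow> a \<notin> set L \<union> set L''"
    using setL setL'' fr by fastforce
  have noB: "\<And>i. BN i \<in> atoms F \<Longrightarrow> r \<le> i \<Longrightarrow> t0 i \<notin> X" for X using assms(1) by (auto simp: wff_def)
  have eF: "mapf (sg N) F = mapf (tau L t0 r) F"
  proof (rule mapf_cong)
    fix x assume "x \<in> atoms F" then show "sg N x = tau L t0 r x"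
      using assms(1) by (cases x) (auto simp: wff_def L_def)
  qed
  have eG: "mapf (sg N) G = mapf (tau L' t0 r) F"
    unfolding p(2) mapf_comp
  proof (rule mapf_cong)
    fix x assume "x \<in> atoms F" then show "(sg N \<circ> pb p) x = tau L' t0 r x"
      using assms(1) by (cases x) (auto simp: wff_def L'_def)
  qed
  have "nfn N r G = resl (rev L) (rf (mapf (tau L' t0 r) F))"
    by (simp add: nfn_def eG L_def)
  also have "scong \<dots> (resl (rev L') (rf (mapf (tau L' t0 r) F)))"
    by (rule resl_perm) (simp add: m)
  also have "scong \<dots> (resl (rev L'') (rf (mapf (tau L'' t0 r) F)))"
    by (rule alpha_gen) (simp_all add: lens dist disj noB, use fresh1 in blast)
  also have "scong \<dots> (resl (rev L) (rf (mapf (tau L t0 r) F)))"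
    by (rule sc_sym, rule alpha_gen) (simp_all add: lens dist disj noB, use fresh2 in blast)
  also have "\<dots> = nfn N r F" by (simp add: nfn_def eF L_def)
  finally show ?thesis by (rule sc_sym)
qed

lemma finite_fn_cap: "finite (fn_cap M)" by (cases M) auto
lemma finite_names: "finite (names P)"
  by (induction P) (auto simp: finite_fn_cap)

lemma bound_ex: "finite S \<Longrightarrow> \<exists>N::nat. \<forall>a\<in>S. a < N"
  using finite_nat_set_iff_bounded by blast

theorem complete:
  assumes "nres P = nres Q" "eqv (nres P) (cf P) (cf Q)"
  shows "scong P Q"
proof -
  obtain N where N: "\<forall>a\<in>names P \<union> names Q. a < N"
    using bound_ex[of "names P \<union> names Q"] finite_names by auto
  have "scong P (nfn N (nres P) (cf P))" using N by (intro nf) auto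
  also have "scong \<dots> (nfn N (nres P) (cf Q))"
  proof (rule nf_eqv[OF wff_cf _ assms(2)])
    fix a assume "FN a \<in> atoms (cf P)" then show "a < N" using N fn_cf fn_names by blast
  qed
  also have "scong \<dots> Q"
  proof -
    have "scong Q (nfn N (nres Q) (cf Q))" using N by (intro nf) auto
    then show ?thesis using assms(1) sc_sym by simp
  qed
  finally show ?thesis .
qed




lemma eqv_FN: "eqv r F G \<Longrightarrow> FN a \<in> atoms F \<longleftrightarrow> FN a \<in> atoms G"
  by (auto simp: eqv_def FN_in_pb)

lemma fn_scong: "scong X Y \<Longrightarrow> fn X = fn Y"
proof -
  assume "scong X Y"
  from scong_canon[OF this] have "eqv (nres X) (cf X) (cf Y)" by auto
  then show ?thesis using eqv_FN fn_cf by blast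
qed

lemma barb_scong: "barb X k \<Longrightarrow> scong X Y \<Longrightarrow> barb Y k"
  unfolding barb_def by (meson sc_sym sc_trans)

lemma barb_fn: "barb X k \<Longrightarrow> k \<in> fn X"
  unfolding barb_def using fn_scong by fastforce

definition htop :: "name \<Rightarrow> forest \<Rightarrow> bool" where
  "htop k F \<longleftrightarrow> (\<exists>H. TAmb (FN k) H \<in># F)"

lemma mem_mapf: "t \<in># M \<Longrightarrow> map_tree f t \<in># mapf f M"
  by (simp add: mapf_def)

lemma htop_mapf_pb: "htop k (mapf (pb p) F) \<longleftrightarrow> htop k F"
proof
  assume "htop k (mapf (pb p) F)"
  then obtain H where "TAmb (FN k) H \<in># mapf (pb p) F" by (auto simp: htop_def)
  then obtain t where t: "t \<in># F" "map_tree (pb p) t = TAmb (FN k) H" by (auto simp: mapf_def)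
  then show "htop k F"
  proof (cases t)
    case (TAmb x M) then show ?thesis using t by (cases x) (auto simp: htop_def)
  next
    case (TAct c M) then show ?thesis using t by auto
  qed
next
  assume "htop k F"
  then obtain H where "TAmb (FN k) H \<in># F" by (auto simp: htop_def)
  from mem_mapf[OF this, of "pb p"] show "htop k (mapf (pb p) F)" by (auto simp: htop_def)
qed

lemma htop_eqv: "eqv r F G \<Longrightarrow> htop k F \<longleftrightarrow> htop k G"
  by (auto simp: eqv_def htop_mapf_pb)

lemma htop_resl: "k \<notin> set A \<Longrightarrow> htop k (cf W) \<Longrightarrow> htop k (cf (resl A W))"
proof (induction A)
  case (Cons a A)
  then obtain H where "TAmb (FN k) H \<in># cf (resl A W)" by (auto simp: htop_def)
  from mem_mapf[OF this, of "bnd a (nres (resl A W))"] show ?case using Cons.prems by (auto simp: htop_def)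
qed auto

lemma barb_htop: "barb Y k \<Longrightarrow> htop k (cf Y)"
proof -
  assume "barb Y k"
  then obtain A Q R where s: "scong Y (resl A (Par (Amb k Q) R))" "k \<notin> set A" by (auto simp: barb_def)
  have "htop k (cf (resl A (Par (Amb k Q) R)))" using s(2) by (intro htop_resl) (auto simp: htop_def)
  then show ?thesis using scong_canon[OF s(1)] htop_eqv by blast
qed

lemma htop_barb: "htop k (cf Y) \<Longrightarrow> barb Y k"
proof -
  assume "htop k (cf Y)"
  then obtain H S where cY: "cf Y = add_mset (TAmb (FN k) H) S" by (auto simp: htop_def dest: multi_member_split)
  obtain N where N: "\<forall>a\<in>names Y \<union> {k}. a < N" using bound_ex[of "names Y \<union> {k}"] finite_names by auto
  let ?Bs = "rev [N..<N + nres Y]"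
  have "scong Y (nfn N (nres Y) (cf Y))" using N by (intro nf) auto
  also have "nfn N (nres Y) (cf Y) = resl ?Bs (rf (add_mset (TAmb k (mapf (sg N) H)) (mapf (sg N) S)))"
    by (simp add: nfn_def cY)
  also have "scong \<dots> (resl ?Bs (Par (Amb k (rf (mapf (sg N) H))) (rf (mapf (sg N) S))))"
    by (rule resl_cong) (metis rf_add rt_simps'(1))
  finally show ?thesis unfolding barb_def using N by (intro exI[of _ ?Bs]) auto
qed

subsection \<open>bisimilarity\<close>

lemma bisim_sym: "bisimBS P Q \<Longrightarrow> bisimBS Q P"
  unfolding bisimBS_def bs_bisim_def by blast
lemma bisim_barb: "bisimBS P Q \<Longrightarrow> barb (fill C P) n \<Longrightarrow> barb (fill C Q) n"
  unfolding bisimBS_def bs_bisim_def by blast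
lemma bisim_red: "bisimBS P Q \<Longrightarrow> red (fill C P) P' \<Longrightarrow> \<exists>Q'. red (fill C Q) Q' \<and> bisimBS P' Q'"
proof -
  assume "bisimBS P Q" "red (fill C P) P'"
  then obtain R where R: "bs_bisim R" "R P Q" unfolding bisimBS_def by blast
  with \<open>red (fill C P) P'\<close> obtain Q' where "red (fill C Q) Q'" "R P' Q'" unfolding bs_bisim_def by blast
  then show ?thesis using R unfolding bisimBS_def by blast
qed

lemma fill_scong: "scong X Y \<Longrightarrow> scong (fill C X) (fill C Y)"
  by (induction C) (auto intro: sc_amb sc_act sc_res sc_parL sc_parR)

lemma bisim_scong:
  assumes "scong P P0" "bisimBS P0 Q0" "scong Q0 Q"
  shows "bisimBS P Q"
proof -
  define R where "R X Y \<longleftrightarrow> (\<exists>X0 Y0. scong X X0 \<and> bisimBS X0 Y0 \<and> scong Y0 Y)" for X Y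
  have "bs_bisim R"
    unfolding bs_bisim_def
  proof (intro conjI allI impI)
    fix X Y assume "R X Y"
    then show "R Y X" unfolding R_def using bisim_sym sc_sym by blast
  next
    fix X Y C n assume "R X Y" "barb (fill C X) n"
    then obtain X0 Y0 where h: "scong X X0" "bisimBS X0 Y0" "scong Y0 Y" by (auto simp: R_def)
    have "barb (fill C X0) n" using \<open>barb (fill C X) n\<close> fill_scong[OF h(1)] barb_scong by blast
    then have "barb (fill C Y0) n" using h(2) bisim_barb by blast
    then show "barb (fill C Y) n" using fill_scong[OF h(3)] barb_scong by blast
  next
    fix X Y C X' assume "R X Y" "red (fill C X) X'"
    then obtain X0 Y0 where h: "scong X X0" "bisimBS X0 Y0" "scong Y0 Y" by (auto simp: R_def)
    have "red (fill C X0) X'"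
      using red_scong[OF sc_sym[OF fill_scong[OF h(1)]] \<open>red (fill C X) X'\<close> sc_refl] .
    then obtain Y' where "red (fill C Y0) Y'" "bisimBS X' Y'" using h(2) bisim_red by blast
    then show "\<exists>Y'. red (fill C Y) Y' \<and> R X' Y'"
      using red_scong[OF sc_sym[OF fill_scong[OF h(3)]] _ sc_refl] unfolding R_def
      by (meson sc_refl)
  qed
  moreover have "R P Q" unfolding R_def using assms by blast
  ultimately show ?thesis unfolding bisimBS_def by blast
qed

lemma red_resl: "red X Y \<Longrightarrow> red (resl A X) (resl A Y)"
  by (induction A) (auto intro: red_res)

lemma scong_cf: "nres X = nres Y \<Longrightarrow> cf X = cf Y \<Longrightarrow> scong X Y"
  by (rule complete) (auto simp: eqv_refl)




lemma set_tree_sub: "t \<in># M \<Longrightarrow> set_tree t \<subseteq> atoms M"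
  by (auto simp: atoms_def)

lemma am_neq: "add_mset x R = add_mset y S \<Longrightarrow> x \<noteq> y \<Longrightarrow> \<exists>K. R = add_mset y K \<and> S = add_mset x K"
  by (auto simp: add_eq_conv_ex)

lemma inv1:
  assumes st: "fstep (add_mset a2 (add_mset a1 \<Phi>)) G"
    and a2: "a2 = TAct (COpen (FN k)) {#}" and a1: "a1 = TAct (COpen (FN n)) F1"
    and fk: "FN k \<notin> atoms \<Phi>" and ht: "htop k G"
  shows "\<exists>H S. \<Phi> = add_mset (TAmb (FN n) H) S \<and> G = add_mset a2 (F1 + H + S)"
proof -
  define M where "M = add_mset a2 (add_mset a1 \<Phi>)"
  have memM: "x \<in># M \<Longrightarrow> x = a2 \<or> x = a1 \<or> x \<in># \<Phi>" for x by (auto simp: M_def)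
  have noK: "x \<in># \<Phi> \<Longrightarrow> FN k \<notin> set_tree x" for x using fk set_tree_sub by blast
  have ambM: "TAmb b X \<in># M \<Longrightarrow> TAmb b X \<in># \<Phi>" for b X using memM a1 a2 by blast
  have noKM: "TAmb (FN k) X \<notin># M" for X using ambM noK by (fastforce simp: set_tree_TAmb)
  from st[folded M_def] show ?thesis
  proof (cases rule: fstep.cases)
    case (fs_open a G0 H R)
    have tM: "TAct (COpen a) G0 \<in># M" and aM: "TAmb a H \<in># M" and RM: "\<And>x. x \<in># R \<Longrightarrow> x \<in># M"
      unfolding fs_open(1) by auto
    have aP: "TAmb a H \<in># \<Phi>" using ambM aM by blast
    from memM[OF tM] show ?thesis
    proof (elim disjE)
      assume "TAct (COpen a) G0 = a2"
      then have "a = FN k" using a2 by simp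
      then show ?thesis using noK[OF aP] by (simp add: set_tree_TAmb)
    next
      assume eq: "TAct (COpen a) G0 = a1"
      then have an: "a = FN n" "G0 = F1" using a1 by auto
      have e0: "add_mset a2 (add_mset a1 \<Phi>) = add_mset a1 (add_mset (TAmb a H) R)"
        using fs_open(1) eq unfolding M_def by metis
      have "add_mset a1 (add_mset a2 \<Phi>) = add_mset a1 (add_mset (TAmb a H) R)"
        by (rule trans[OF add_mset_commute e0])
      then have "add_mset (TAmb a H) R = add_mset a2 \<Phi>" by simp
      moreover have "TAmb a H \<noteq> a2" using a2 by simp
      ultimately have "\<exists>K. R = add_mset a2 K \<and> \<Phi> = add_mset (TAmb a H) K" by (rule am_neq)
      then obtain K where K: "R = add_mset a2 K" "\<Phi> = add_mset (TAmb a H) K" by blast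
      have "G = add_mset a2 (F1 + H + K)" using fs_open(2) an K by simp
      then show ?thesis using K an by blast
    next
      assume tP: "TAct (COpen a) G0 \<in># \<Phi>"
      from ht obtain X where X: "TAmb (FN k) X \<in># G" by (auto simp: htop_def)
      then have "TAmb (FN k) X \<in># G0 \<or> TAmb (FN k) X \<in># H \<or> TAmb (FN k) X \<in># R" using fs_open(2) by auto
      then show ?thesis
      proof (elim disjE)
        assume "TAmb (FN k) X \<in># G0"
        then have "FN k \<in> atoms G0" using set_tree_sub by (fastforce simp: set_tree_TAmb)
        then show ?thesis using noK[OF tP] by (simp add: set_tree_TAct)
      next
        assume "TAmb (FN k) X \<in># H"
        then have "FN k \<in> atoms H" using set_tree_sub by (fastforce simp: set_tree_TAmb)
        then show ?thesis using noK[OF aP] by (simp add: set_tree_TAmb)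
      next
        assume "TAmb (FN k) X \<in># R" then show ?thesis using RM noKM by blast
      qed
    qed
  next
    case (fs_in a b G0 H K R)
    have bM: "TAmb b K \<in># M" and RM: "\<And>x. x \<in># R \<Longrightarrow> x \<in># M"
      unfolding fs_in(1) by auto
    from ht obtain X where X: "TAmb (FN k) X \<in># G" by (auto simp: htop_def)
    then have "b = FN k \<or> TAmb (FN k) X \<in># R" using fs_in(2) by auto
    then show ?thesis using bM RM noKM by blast
  next
    case (fs_out b a G0 H K R)
    have bM: "TAmb b (add_mset (TAmb a (add_mset (TAct (COut b) G0) H)) K) \<in># M" and RM: "\<And>x. x \<in># R \<Longrightarrow> x \<in># M"
      unfolding fs_out(1) by auto
    have bP: "TAmb b (add_mset (TAmb a (add_mset (TAct (COut b) G0) H)) K) \<in># \<Phi>" using ambM bM by blast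
    from ht obtain X where X: "TAmb (FN k) X \<in># G" by (auto simp: htop_def)
    then have "a = FN k \<or> b = FN k \<or> TAmb (FN k) X \<in># R" using fs_out(2) by auto
    then show ?thesis
    proof (elim disjE)
      assume "a = FN k" then show ?thesis using noK[OF bP] by (simp add: set_tree_TAmb)
    next
      assume "b = FN k" then show ?thesis using noK[OF bP] by (simp add: set_tree_TAmb)
    next
      assume "TAmb (FN k) X \<in># R" then show ?thesis using RM noKM by blast
    qed
  next
    case (fs_amb G0 G0' a R)
    have bM: "TAmb a G0 \<in># M" and RM: "\<And>x. x \<in># R \<Longrightarrow> x \<in># M"
      unfolding fs_amb(1) by auto
    from ht obtain X where X: "TAmb (FN k) X \<in># G" by (auto simp: htop_def)
    then have "a = FN k \<or> TAmb (FN k) X \<in># R" using fs_amb(2) by auto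
    then show ?thesis using bM RM noKM by blast
  qed
qed

lemma inv2:
  assumes st: "fstep (add_mset a2 (add_mset kk \<Psi>)) G"
    and a2: "a2 = TAct (COpen (FN k)) {#}" and kk: "kk = TAmb (FN k) {#}"
    and fk: "FN k \<notin> atoms \<Psi>" and nh: "\<not> htop k G"
  shows "G = \<Psi>"
proof -
  define M where "M = add_mset a2 (add_mset kk \<Psi>)"
  have noK: "x \<in># \<Psi> \<Longrightarrow> FN k \<notin> set_tree x" for x using fk set_tree_sub by blast
  have kM: "kk \<in># M" by (simp add: M_def)
  have nG: "kk \<notin># G" using nh kk by (auto simp: htop_def)
  from st[folded M_def] show ?thesis
  proof (cases rule: fstep.cases)
    case (fs_open a G0 H R)
    have tM: "TAct (COpen a) G0 \<in># M" unfolding fs_open(1) by auto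
    then have "TAct (COpen a) G0 = a2 \<or> TAct (COpen a) G0 \<in># \<Psi>" using kk by (auto simp: M_def)
    then show ?thesis
    proof (elim disjE)
      assume eq: "TAct (COpen a) G0 = a2"
      then have aa: "a = FN k" "G0 = {#}" using a2 by auto
      have "add_mset a2 (add_mset (TAmb a H) R) = add_mset a2 (add_mset kk \<Psi>)"
        using fs_open(1) eq unfolding M_def by metis
      then have e2: "add_mset (TAmb a H) R = add_mset kk \<Psi>" by simp
      show ?thesis
      proof (cases "TAmb a H = kk")
        case True
        then have "H = {#}" "R = \<Psi>" using e2 kk by auto
        then show ?thesis using fs_open(2) aa by simp
      next
        case False
        then obtain K where "\<Psi> = add_mset (TAmb a H) K" using am_neq[OF e2] by blast
        then show ?thesis using noK[of "TAmb a H"] aa by (simp add: set_tree_TAmb)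
      qed
    next
      assume tP: "TAct (COpen a) G0 \<in># \<Psi>"
      have "kk = TAmb a H \<or> kk \<in># R" using kM kk unfolding fs_open(1) by auto
      then show ?thesis
      proof (elim disjE)
        assume "kk = TAmb a H" then have "a = FN k" using kk by simp
        then show ?thesis using noK[OF tP] by (simp add: set_tree_TAct)
      next
        assume "kk \<in># R" then show ?thesis using nG fs_open(2) by simp
      qed
    qed
  next
    case (fs_in a b G0 H K R)
    have "kk = TAmb b K \<or> kk \<in># R" using kM kk unfolding fs_in(1) by auto
    then show ?thesis
    proof (elim disjE)
      assume "kk = TAmb b K" then have "b = FN k" using kk by simp
      then show ?thesis using nh fs_in(2) by (auto simp: htop_def)
    next
      assume "kk \<in># R" then show ?thesis using nG fs_in(2) by simp
    qed
  next
    case (fs_out b a G0 H K R)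
    have "kk \<in># R" using kM kk unfolding fs_out(1) by auto
    then show ?thesis using nG fs_out(2) by simp
  next
    case (fs_amb G0 G0' a R)
    have "kk = TAmb a G0 \<or> kk \<in># R" using kM kk unfolding fs_amb(1) by auto
    then show ?thesis
    proof (elim disjE)
      assume "kk = TAmb a G0" then have "a = FN k" using kk by simp
      then show ?thesis using nh fs_amb(2) by (auto simp: htop_def)
    next
      assume "kk \<in># R" then show ?thesis using nG fs_amb(2) by simp
    qed
  qed
qed




definition rho :: "nat \<Rightarrow> nat \<Rightarrow> nat \<Rightarrow> cn \<Rightarrow> cn" where
  "rho N0 m r x = (case x of FN a \<Rightarrow> if N0 \<le> a \<and> a < N0 + m then BN (r + (a - N0)) else FN a | BN i \<Rightarrow> BN i)"

lemma cf_resl_fresh: "cf (resl (rev [N0..<N0+m]) Z) = mapf (rho N0 m (nres Z)) (cf Z)"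
proof (induction m)
  case 0 show ?case by (simp, rule mapf_id[symmetric]) (auto simp: rho_def split: cn.splits)
next
  case (Suc m)
  have "cf (resl (rev [N0..<N0 + Suc m]) Z) = mapf (bnd (N0 + m) (nres Z + m)) (cf (resl (rev [N0..<N0+m]) Z))"
    by simp
  also have "\<dots> = mapf (rho N0 (Suc m) (nres Z)) (cf Z)"
    unfolding Suc mapf_comp
    by (rule mapf_cong) (auto simp: rho_def bnd_def split: cn.splits)
  finally show ?case .
qed

lemma pb_inv: "p permutes S \<Longrightarrow> mapf (pb (inv p)) (mapf (pb p) F) = F"
  unfolding mapf_comp by (rule mapf_id) (auto simp: pb_def permutes_inverses split: cn.splits)

theorem mainTheorem5:
  assumes "bisimBS P Q"
      and "open_trans n T P P'"
  shows "\<exists>Q'. open_trans n T Q Q' \<and> bisimBS P' Q'"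
proof -
  obtain A P1 P2 where hP: "scong P (resl A (Par (Amb n P1) P2))" "n \<notin> set A" "set A \<inter> fn T = {}"
      "scong P' (resl A (Par (Par P1 T) P2))"
    using assms(2) unfolding open_trans_def by blast
  obtain k where kb: "\<forall>a\<in>names P \<union> names Q \<union> names T \<union> names P1 \<union> names P2 \<union> set A \<union> {n}. a < k"
    using bound_ex[of "names P \<union> names Q \<union> names T \<union> names P1 \<union> names P2 \<union> set A \<union> {n}"]
    by (auto simp: finite_names)
  have kn: "k \<noteq> n" "k \<notin> set A" "k \<notin> fn T" "k \<notin> fn P1" "k \<notin> fn P2" "k \<notin> fn Q"
    using kb fn_names[of T] fn_names[of P1] fn_names[of P2] fn_names[of Q] by auto
  define T' where "T' = Par T (Amb k Nil)"
  define W where "W = Par (Act (Open k) Nil) (Act (Open n) T')"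
  define Z1 where "Z1 = resl A (Par (Par T' P1) (Par (Act (Open k) Nil) P2))"
  define Z2 where "Z2 = resl A (Par (Par Nil Nil) (Par (Par T P1) P2))"
  have fnW: "set A \<inter> fn W = {}" using hP(2,3) kn by (auto simp: W_def T'_def)
  have r1: "red (Par W P) Z1"
  proof -
    have "scong (Par W P) (Par W (resl A (Par (Amb n P1) P2)))" using hP(1) by (rule sc_parR)
    also have "scong \<dots> (resl A (Par W (Par (Amb n P1) P2)))" using fnW by (rule par_resl)
    also have "scong \<dots> (resl A (Par (Par (Act (Open n) T') (Amb n P1)) (Par (Act (Open k) Nil) P2)))"
      by (rule resl_cong, rule scong_cf) (auto simp: W_def add_ac add_mset_commute)
    finally have s: "scong (Par W P) (resl A (Par (Par (Act (Open n) T') (Amb n P1)) (Par (Act (Open k) Nil) P2)))" .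
    have "red (resl A (Par (Par (Act (Open n) T') (Amb n P1)) (Par (Act (Open k) Nil) P2))) Z1"
      unfolding Z1_def by (intro red_resl red_par red_open)
    then show ?thesis using red_scong[OF s _ sc_refl] by blast
  qed
  have b1: "barb Z1 k"
  proof -
    have "scong Z1 (resl A (Par (Amb k Nil) (Par (Par T P1) (Par (Act (Open k) Nil) P2))))"
      unfolding Z1_def by (rule resl_cong, rule scong_cf) (auto simp: T'_def add_ac add_mset_commute)
    then show ?thesis unfolding barb_def using kn by blast
  qed
  have r2: "red Z1 Z2"
  proof -
    have s: "scong Z1 (resl A (Par (Par (Act (Open k) Nil) (Amb k Nil)) (Par (Par T P1) P2)))"
      unfolding Z1_def by (rule resl_cong, rule scong_cf) (auto simp: T'_def add_ac add_mset_commute)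
    have "red (resl A (Par (Par (Act (Open k) Nil) (Amb k Nil)) (Par (Par T P1) P2))) Z2"
      unfolding Z2_def by (intro red_resl red_par red_open)
    then show ?thesis using red_scong[OF s _ sc_refl] by blast
  qed
  have nb2: "\<not> barb Z2 k"
  proof
    assume "barb Z2 k"
    then have "k \<in> fn Z2" by (rule barb_fn)
    then show False using kn by (auto simp: Z2_def)
  qed
  have s2: "scong P' Z2"
  proof -
    have "scong Z2 (resl A (Par (Par T P1) P2))"
      unfolding Z2_def by (rule resl_cong, rule scong_cf) (auto simp: add_ac add_mset_commute)
    also have "scong \<dots> (resl A (Par (Par P1 T) P2))"
      by (rule resl_cong, rule sc_parL, rule sc_par_comm)
    finally have "scong Z2 (resl A (Par (Par P1 T) P2))" .
    then show ?thesis using hP(4) by (meson sc_sym sc_trans)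
  qed
  obtain Y1 where Y1: "red (Par W Q) Y1" "bisimBS Z1 Y1"
    using bisim_red[OF assms(1), of "CParR W Hole" Z1] r1 by auto
  have bY1: "barb Y1 k" using bisim_barb[OF Y1(2), of Hole k] b1 by simp
  obtain Y2 where Y2: "red Y1 Y2" "bisimBS Z2 Y2"
    using bisim_red[OF Y1(2), of Hole Z2] r2 by auto
  have nbY2: "\<not> barb Y2 k" using bisim_barb[OF bisim_sym[OF Y2(2)], of Hole k] nb2 by auto
  define rT where "rT = nres T"
  define rQ where "rQ = nres Q"
  define a2 where "a2 = TAct (COpen (FN k)) ({#} :: forest)"
  define kk where "kk = TAmb (FN k) ({#} :: forest)"
  define a1 where "a1 = TAct (COpen (FN n)) (add_mset kk (cf T))"
  define \<Phi> where "\<Phi> = mapf (shb rT) (cf Q)"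
  have cfX: "cf (Par W Q) = add_mset a2 (add_mset a1 \<Phi>)"
    by (simp add: W_def T'_def a2_def a1_def kk_def \<Phi>_def rT_def)
  have nX: "nres (Par W Q) = rT + rQ" by (simp add: W_def T'_def rT_def rQ_def)
  have fkPhi: "FN k \<notin> atoms \<Phi>" using kn fn_cf[of k Q] by (auto simp: \<Phi>_def FN_in_shb)
  obtain G1 where G1: "fstep (cf (Par W Q)) G1" "eqv (rT + rQ) G1 (cf Y1)" and nY1: "nres Y1 = rT + rQ"
    using red_canon[OF Y1(1)] nX by auto
  have hG1: "htop k G1" using barb_htop[OF bY1] htop_eqv[OF G1(2)] by blast
  obtain H S where HS: "\<Phi> = add_mset (TAmb (FN n) H) S" "G1 = add_mset a2 (add_mset a1 {#} - {#a1#} + (add_mset kk (cf T)) + H + S)"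
    using inv1[OF G1(1)[unfolded cfX] a2_def a1_def fkPhi hG1] by auto
  define \<Psi> where "\<Psi> = cf T + H + S"
  have G1e: "G1 = add_mset a2 (add_mset kk \<Psi>)" using HS(2) by (simp add: \<Psi>_def)
  obtain p1 where p1: "p1 permutes {..<rT + rQ}" "cf Y1 = mapf (pb p1) G1" using G1(2) by (auto simp: eqv_def)
  obtain G2 where G2: "fstep (cf Y1) G2" "eqv (rT + rQ) G2 (cf Y2)" and nY2: "nres Y2 = rT + rQ"
    using red_canon[OF Y2(1)] nY1 by auto
  have st2: "fstep G1 (mapf (pb (inv p1)) G2)"
    using fstep_map[OF G2(1), of "pb (inv p1)"] pb_inv[OF p1(1)] p1(2) by simp
  have nhG2: "\<not> htop k (mapf (pb (inv p1)) G2)"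
    using nbY2 htop_barb htop_eqv[OF G2(2)] htop_mapf_pb by blast
  have fkPsi: "FN k \<notin> atoms \<Psi>" using fkPhi kn fn_cf[of k T] HS(1) by (auto simp: \<Psi>_def set_tree_TAmb)
  have G2e: "mapf (pb (inv p1)) G2 = \<Psi>"
    using inv2[OF st2[unfolded G1e] a2_def kk_def fkPsi nhG2] .
  have "G2 = mapf (pb p1) \<Psi>"
  proof -
    have "G2 = mapf (pb p1) (mapf (pb (inv p1)) G2)"
      using pb_inv[OF permutes_inv[OF p1(1)], of G2] inv_inv_eq[OF permutes_bij[OF p1(1)]] by simp
    then show ?thesis using G2e by simp
  qed
  then have "eqv (rT + rQ) \<Psi> G2" using eqv_mapf[OF p1(1), of \<Psi>] by simp
  then have eY2: "eqv (rT + rQ) \<Psi> (cf Y2)" using eqv_trans G2(2) by blast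
  have "image_mset (map_tree (shb rT)) (cf Q) = add_mset (TAmb (FN n) H) S"
    using HS(1) by (simp add: \<Phi>_def mapf_def)
  then obtain t S0 where tS: "cf Q = add_mset t S0" "map_tree (shb rT) t = TAmb (FN n) H" "image_mset (map_tree (shb rT)) S0 = S"
    by (metis msed_map_invR)
  obtain H0 where H0: "t = TAmb (FN n) H0" "mapf (shb rT) H0 = H"
  proof (cases t)
    case (TAmb x M)
    then show ?thesis using tS(2) that by (cases x) auto
  next
    case (TAct c M) then show ?thesis using tS(2) by simp
  qed
  have S0: "mapf (shb rT) S0 = S" using tS(3) by (simp add: mapf_def)
  have cfQ: "cf Q = add_mset (TAmb (FN n) H0) S0" using tS(1) H0(1) by simp
  obtain N0 where N0: "\<forall>a\<in>names Q \<union> names T \<union> {n, k}. a < N0"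
    using bound_ex[of "names Q \<union> names T \<union> {n, k}"] by (auto simp: finite_names)
  define Bq where "Bq = rev [N0..<N0 + rQ]"
  define Q1 where "Q1 = rf (mapf (sg N0) H0)"
  define Q2 where "Q2 = rf (mapf (sg N0) S0)"
  define Q' where "Q' = resl Bq (Par (Par Q1 T) Q2)"
  have q1: "scong Q (resl Bq (Par (Amb n Q1) Q2))"
  proof -
    have "scong Q (nfn N0 rQ (cf Q))" unfolding rQ_def using N0 by (intro nf) auto
    also have "nfn N0 rQ (cf Q) = resl Bq (rf (add_mset (TAmb n (mapf (sg N0) H0)) (mapf (sg N0) S0)))"
      by (simp add: nfn_def Bq_def cfQ)
    also have "scong \<dots> (resl Bq (Par (Amb n Q1) Q2))"
      unfolding Q1_def Q2_def by (rule resl_cong) (metis rf_add rt_simps'(1))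
    finally show ?thesis .
  qed
  have q2: "n \<notin> set Bq" "set Bq \<inter> fn T = {}"
    using N0 fn_names[of T] by (auto simp: Bq_def) (meson UnI2 not_le subsetD)
  have ot: "open_trans n T Q Q'"
    unfolding open_trans_def Q'_def using q1 q2 sc_refl by blast
  have atQ: "atoms H0 \<subseteq> atoms (cf Q)" "atoms S0 \<subseteq> atoms (cf Q)" using cfQ by (auto simp: set_tree_TAmb)
  have nQ1: "nres Q1 = 0" "cf Q1 = mapf FN (mapf (sg N0) H0)" using cf_rf unfolding Q1_def by auto
  have nQ2: "nres Q2 = 0" "cf Q2 = mapf FN (mapf (sg N0) S0)" using cf_rf unfolding Q2_def by auto
  have rhoQ: "mapf (rho N0 rQ rT) (mapf FN (mapf (sg N0) X)) = mapf (shb rT) X"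
    if "atoms X \<subseteq> atoms (cf Q)" for X
  proof -
    have pw: "rho N0 rQ rT (FN (sg N0 x)) = shb rT x" if x: "x \<in> atoms X" for x
    proof -
      have xQ: "x \<in> atoms (cf Q)" using x \<open>atoms X \<subseteq> atoms (cf Q)\<close> by auto
      show ?thesis
      proof (cases x)
        case (FN a) then have "a \<in> names Q" using xQ fn_cf fn_names by blast
        then have "a < N0" using N0 by blast
        then show ?thesis using FN by (auto simp: rho_def)
      next
        case (BN i) then have "i < rQ" using xQ wf_cf unfolding rQ_def by blast
        then show ?thesis using BN by (auto simp: rho_def)
      qed
    qed
    show ?thesis unfolding mapf_comp by (rule mapf_cong) (simp add: pw)
  qed
  have rhoT: "mapf (rho N0 rQ rT) (cf T) = cf T"
  proof (rule mapf_id)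
    fix x assume xT: "x \<in> atoms (cf T)"
    show "rho N0 rQ rT x = x"
    proof (cases x)
      case (FN a) then have "a \<in> names T" using xT fn_cf fn_names by blast
      then have "a < N0" using N0 by blast
      then show ?thesis using FN by (auto simp: rho_def)
    qed (auto simp: rho_def)
  qed
  have shbFN: "shb r \<circ> (FN \<circ> g) = FN \<circ> g" for r and g :: "cn \<Rightarrow> name"
    by (auto simp: fun_eq_iff)
  have cfQ': "cf Q' = \<Psi>"
  proof -
    have "cf Q' = mapf (rho N0 rQ (nres (Par (Par Q1 T) Q2))) (cf (Par (Par Q1 T) Q2))"
      unfolding Q'_def Bq_def by (rule cf_resl_fresh)
    also have "nres (Par (Par Q1 T) Q2) = rT" using nQ1 nQ2 by (simp add: rT_def)
    also have "cf (Par (Par Q1 T) Q2) = mapf FN (mapf (sg N0) H0) + cf T + mapf FN (mapf (sg N0) S0)"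
      using nQ1 nQ2 by (simp add: shbFN)
    also have "mapf (rho N0 rQ rT) \<dots> = H + cf T + S"
      using rhoQ[OF atQ(1)] rhoQ[OF atQ(2)] rhoT H0(2) S0 by simp
    finally show ?thesis by (simp add: \<Psi>_def add_ac)
  qed
  have nQ': "nres Q' = rT + rQ" using nQ1 nQ2 by (simp add: Q'_def Bq_def rT_def)
  have sYQ: "scong Y2 Q'"
    by (rule complete) (use nY2 nQ' cfQ' eY2 eqv_sym in auto)
  have "bisimBS P' Q'" by (rule bisim_scong[OF s2 Y2(2) sYQ])
  then show ?thesis using ot by blast
qed


end
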